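(* Assume (A1)–(A4) hold and that the aggregator satisfies the robustness property (R) at every iteration. Let $$A=\frac{48BL^2c\delta}{p}+\frac{6(1-p)}{p}\Big(\frac{4c\delta}{p}+\frac{1}{2G}\Big)\Big(\omega L^2+\frac{(1+\omega)\mathcal L_\pm^2}{b}\Big)+\frac{6(1-p)}{p}\Big(\frac{4c\delta(1+\omega)}{p}+\frac{\omega}{2G}\Big)L_\pm^2,$$ and suppose $0<\gamma\le \frac{1}{L+\sqrt A}$ and $48cB\delta<p$. Then for every $K\ge 0$, if $\widehat x^K$ is chosen uniformly at random from $\{x^0,x^1,\dots,x^K\}$ (the iterates of Byz-VR-MARINA), $$\mathbb E\big[\|\nabla f(\widehat x^K)\|^2\big]\le \frac{2\,\mathbb E[\Phi_0]}{\gamma\big(1-\frac{48Bc\delta}{p}\big)(K+1)}+\frac{24c\delta\zeta^2}{p-48Bc\delta},$$ where $\Phi_0=f(x^0)-f_*+\frac{\gamma}{p}\|g^0-\nabla f(x^0)\|^2$. (In particular, for $B=0$: $\mathbb E\|\nabla f(\widehat x^K)\|^2\le \frac{2\mathbb E[\Phi_0]}{\gamma(K+1)}+\frac{24c\delta\zeta^2}{p}$.)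
   Context: Setting. There are $n$ workers indexed by $[n]=\mathcal G\sqcup\mathcal B$: $\mathcal G$ is the set of good workers, $G=|\mathcal G|\ge2$, and $\mathcal B$ is the set of Byzantine workers with $|\mathcal B|\le\delta n$, $0\le\delta<1/2$. For $i\in\mathcal G$, $f_i(x)=\frac1m\sum_{j=1}^m f_{i,j}(x)$ with differentiable $f_{i,j}:\mathbb R^d\to\mathbb R$, and $f=\frac1G\sum_{i\in\mathcal G}f_i$. All expectations $\mathbb E$ are full expectations. (A1) $f$ is $L$-smooth ($\|\nabla f(x)-\nabla f(y)\|\le L\|x-y\|$ for all $x,y$) and $f_*=\inf_x f(x)>-\infty$. (A2) ($(B,\zeta^2)$-heterogeneity) For some $B,\zeta\ge0$: $\frac1G\sum_{i\in\mathcal G}\|\nabla f_i(x)-\nabla f(x)\|^2\le B\|\nabla f(x)\|^2+\zeta^2$ for all $x$. (A3) (global Hessian variance) For some $L_\pm\ge0$: $\frac1G\sum_{i\in\mathcal G}\|\nabla f_i(x)-\nabla f_i(y)\|^2-\|\nabla f(x)-\nabla f(y)\|^2\le L_\pm^2\|x-y\|^2$ for all $x,y$. (A4) (local Hessian variance) There is a batch size $b\ge1$ and, for each $i\in\mathcal G$ and $x,y$, a random vector $\widehat\Delta_i(x,y)$ with $\mathbb E[\widehat\Delta_i(x,y)]=\Delta_i(x,y):=\nabla f_i(x)-\nabla f_i(y)$ and $\frac1G\sum_{i\in\mathcal G}\mathbb E\|\widehat\Delta_i(x,y)-\Delta_i(x,y)\|^2\le\frac{\mathcal L_\pm^2}{b}\|x-y\|^2$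 for some $\mathcal L_\pm\ge0$. Compressor: $\mathcal Q:\mathbb R^d\to\mathbb R^d$ is a stochastic map with $\mathbb E[\mathcal Q(x)]=x$ and $\mathbb E\|\mathcal Q(x)-x\|^2\le\omega\|x\|^2$ for all $x$, for some $\omega\ge0$. Algorithm Byz-VR-MARINA with stepsize $\gamma>0$, probability $p\in(0,1]$, start $x^0$, and initial vector $g^0\in\mathbb R^d$ (possibly random). For $k=0,1,2,\dots$: draw $c_k\sim\mathrm{Bernoulli}(p)$ independently of everything else; set $x^{k+1}=x^k-\gamma g^k$; each good worker $i\in\mathcal G$ sets $g_i^{k+1}=\nabla f_i(x^{k+1})$ if $c_k=1$ and $g_i^{k+1}=g^k+\mathcal Q(\widehat\Delta_i(x^{k+1},x^k))$ if $c_k=0$, where, conditionally on the past and on $c_k$, the estimators $\widehat\Delta_i$ and the compressions are sampled freshly and independently across $i\in\mathcal G$ (the compression being applied with fresh randomness to its input); each Byzantine worker $i\in\mathcal B$ sends an arbitrary vector $g_i^{k+1}$ (which may depend on everything); finally $g^{k+1}=\mathrm{ARAgg}(g_1^{k+1},\dots,g_n^{k+1})$. Robustness property (R) of the aggregator, with constant $c>0$: for every $k\ge0$, $\mathbb E\|g^{k+1}-\bar g^{k+1}\|^2\le\frac{c\delta}{G(G-1)}\sum_{i,l\in\mathcal G}\mathbb E\|g_i^{k+1}-g_l^{k+1}\|^2$, where $\bar g^{k+1}=\frac1G\sum_{i\in\mathcal G}g_i^{k+1}$. *)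

theory Defs
  imports "HOL-Probability.Probability"
begin

definition loc_f :: "nat \<Rightarrow> (nat \<Rightarrow> nat \<Rightarrow> 'a \<Rightarrow> real) \<Rightarrow> nat \<Rightarrow> 'a \<Rightarrow> real" where
  "loc_f m fij i x = (\<Sum>j<m. fij i j x) / real m"

definition loc_grad :: "nat \<Rightarrow> (nat \<Rightarrow> nat \<Rightarrow> 'a \<Rightarrow> 'a::real_vector) \<Rightarrow> nat \<Rightarrow> 'a \<Rightarrow> 'a" where
  "loc_grad m dfij i x = (1 / real m) *\<^sub>R (\<Sum>j<m. dfij i j x)"

definition glob_f :: "nat set \<Rightarrow> nat \<Rightarrow> (nat \<Rightarrow> nat \<Rightarrow> 'a \<Rightarrow> real) \<Rightarrow> 'a \<Rightarrow> real" where
  "glob_f Gs m fij x = (\<Sum>i\<in>Gs. loc_f m fij i x) / real (card Gs)"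

definition glob_grad :: "nat set \<Rightarrow> nat \<Rightarrow> (nat \<Rightarrow> nat \<Rightarrow> 'a \<Rightarrow> 'a::real_vector) \<Rightarrow> 'a \<Rightarrow> 'a" where
  "glob_grad Gs m dfij x = (1 / real (card Gs)) *\<^sub>R (\<Sum>i\<in>Gs. loc_grad m dfij i x)"

definition constA :: "real \<Rightarrow> real \<Rightarrow> real \<Rightarrow> real \<Rightarrow> real \<Rightarrow> real \<Rightarrow> real \<Rightarrow> real \<Rightarrow> real \<Rightarrow> real \<Rightarrow> real" where
  "constA B L c \<delta> p G \<omega> LL b Lpm =
     48 * B * L^2 * c * \<delta> / p
   + 6 * (1 - p) / p * (4 * c * \<delta> / p + 1 / (2 * G)) * (\<omega> * L^2 + (1 + \<omega>) * LL^2 / b)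
   + 6 * (1 - p) / p * (4 * c * \<delta> * (1 + \<omega>) / p + \<omega> / (2 * G)) * Lpm^2"

end

theory Submission
  imports Defs "HOL-Probability.Probability"
begin

lemma norm_add_sq: "(norm (u + v))^2 = (norm u)^2 + 2 * (u \<bullet> v) + (norm (v::'a::real_inner))^2"
  by (simp add: power2_norm_eq_inner inner_add_left inner_add_right inner_commute)

lemma var_one:
  fixes U :: "'b \<Rightarrow> 'a::euclidean_space"
  assumes N: "prob_space N" and iU: "integrable N U" and mU: "(\<integral>y. U y \<partial>N) = m"
  shows "(\<integral>\<^sup>+y. ennreal ((norm (u + a *\<^sub>R (U y - m)))^2) \<partial>N)
     \<le> ennreal ((norm u)^2) + ennreal (a^2) * (\<integral>\<^sup>+y. ennreal ((norm (U y - m))^2) \<partial>N)"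
proof -
  interpret prob_space N by fact
  have Um[measurable]: "U \<in> borel_measurable N" using iU by auto
  show ?thesis
  proof (cases "(\<integral>\<^sup>+y. ennreal ((norm (U y - m))^2) \<partial>N) = \<infinity>")
    case True
    show ?thesis
    proof (cases "a = 0")
      case True
      then show ?thesis by (simp add: emeasure_space_1)
    next
      case False
      then have "ennreal (a^2) * (\<integral>\<^sup>+y. ennreal ((norm (U y - m))^2) \<partial>N) = \<infinity>"
        using \<open>_ = \<infinity>\<close> by (simp add: ennreal_mult_top)
      then show ?thesis by simp
    qed
  next
    case False
    have iV: "integrable N (\<lambda>y. (norm (U y - m))^2)"
      by (rule integrableI_nonneg) (use False in \<open>auto simp: top.not_eq_extremum\<close>)
    have iW: "integrable N (\<lambda>y. U y - m)" using iU by auto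
    have iI: "integrable N (\<lambda>y. u \<bullet> (U y - m))" using iW by (rule integrable_inner_right)
    have eq: "\<And>y. (norm (u + a *\<^sub>R (U y - m)))^2 = (norm u)^2 + 2 * a * (u \<bullet> (U y - m)) + a^2 * (norm (U y - m))^2"
      by (simp add: norm_add_sq power_mult_distrib)
    have iT: "integrable N (\<lambda>y. (norm u)^2 + 2 * a * (u \<bullet> (U y - m)) + a^2 * (norm (U y - m))^2)"
      using iI iV by auto
    have "(\<integral>\<^sup>+y. ennreal ((norm (u + a *\<^sub>R (U y - m)))^2) \<partial>N)
        = ennreal (\<integral>y. (norm u)^2 + 2 * a * (u \<bullet> (U y - m)) + a^2 * (norm (U y - m))^2 \<partial>N)"
      unfolding eq by (rule nn_integral_eq_integral[OF iT]) (simp add: eq[symmetric])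
    also have "(\<integral>y. (norm u)^2 + 2 * a * (u \<bullet> (U y - m)) + a^2 * (norm (U y - m))^2 \<partial>N)
       = (norm u)^2 + 2 * a * (\<integral>y. u \<bullet> (U y - m) \<partial>N) + a^2 * (\<integral>y. (norm (U y - m))^2 \<partial>N)"
      using iI iV by (simp add: prob_space)
    also have "(\<integral>y. u \<bullet> (U y - m) \<partial>N) = 0"
      using iW iU mU by (simp add: prob_space)
    also have "(\<integral>\<^sup>+y. ennreal ((norm (U y - m))^2) \<partial>N) = ennreal (\<integral>y. (norm (U y - m))^2 \<partial>N)"
      by (rule nn_integral_eq_integral[OF iV]) simp
    ultimately have "(\<integral>\<^sup>+y. ennreal ((norm (u + a *\<^sub>R (U y - m)))^2) \<partial>N)
       = ennreal ((norm u)^2 + a^2 * (\<integral>y. (norm (U y - m))^2 \<partial>N))"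
      and e2: "(\<integral>\<^sup>+y. ennreal ((norm (U y - m))^2) \<partial>N) = ennreal (\<integral>y. (norm (U y - m))^2 \<partial>N)"
      by simp_all
    moreover have "ennreal ((norm u)^2 + a^2 * (\<integral>y. (norm (U y - m))^2 \<partial>N))
       = ennreal ((norm u)^2) + ennreal (a^2) * ennreal (\<integral>y. (norm (U y - m))^2 \<partial>N)"
      by (subst ennreal_plus) (auto intro!: integral_nonneg_AE simp: ennreal_mult)
    ultimately show ?thesis by simp
  qed
qed

lemma var_prod_core:
  fixes U :: "'i \<Rightarrow> 'b \<Rightarrow> 'a::euclidean_space" and MM :: "'i \<Rightarrow> 'b measure"
  assumes I: "finite I" and P: "\<And>i. prob_space (MM i)"
    and iU: "\<And>i. i \<in> I \<Longrightarrow> integrable (MM i) (U i)"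
    and mU: "\<And>i. i \<in> I \<Longrightarrow> (\<integral>y. U i y \<partial>MM i) = mm i"
  shows "(\<integral>\<^sup>+\<omega>. ennreal ((norm (w + (\<Sum>i\<in>I. a i *\<^sub>R (U i (\<omega> i) - mm i))))^2) \<partial>PiM I MM)
     \<le> ennreal ((norm w)^2) + (\<Sum>i\<in>I. ennreal ((a i)^2) * (\<integral>\<^sup>+y. ennreal ((norm (U i y - mm i))^2) \<partial>MM i))"
  using I iU mU
proof (induction I arbitrary: w rule: finite_induct)
  case empty
  interpret prob_space "PiM {} MM" by (rule prob_space_PiM) (use P in auto)
  show ?case by (simp add: emeasure_space_1)
next
  case (insert j I)
  interpret product_sigma_finite MM
    unfolding product_sigma_finite_def using P by (auto intro: prob_space_imp_sigma_finite)
  interpret PI: prob_space "PiM I MM" by (rule prob_space_PiM) (use P in auto)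
  have mU[measurable]: "\<And>i. i \<in> insert j I \<Longrightarrow> U i \<in> borel_measurable (MM i)"
    using insert.prems by auto
  have meas: "(\<lambda>\<omega>. ennreal ((norm (w + (\<Sum>i\<in>insert j I. a i *\<^sub>R (U i (\<omega> i) - mm i))))^2))
      \<in> borel_measurable (PiM (insert j I) MM)"
    by measurable
  have measI: "(\<lambda>\<omega>. ennreal ((norm (w + (\<Sum>i\<in>I. a i *\<^sub>R (U i (\<omega> i) - mm i))))^2))
      \<in> borel_measurable (PiM I MM)"
    by measurable
  let ?V = "ennreal ((a j)^2) * (\<integral>\<^sup>+y. ennreal ((norm (U j y - mm j))^2) \<partial>MM j)"
  have "(\<integral>\<^sup>+\<omega>. ennreal ((norm (w + (\<Sum>i\<in>insert j I. a i *\<^sub>R (U i (\<omega> i) - mm i))))^2) \<partial>PiM (insert j I) MM)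
     = (\<integral>\<^sup>+\<omega>. \<integral>\<^sup>+y. ennreal ((norm (w + (\<Sum>i\<in>insert j I. a i *\<^sub>R (U i (fun_upd \<omega> j y i) - mm i))))^2) \<partial>MM j \<partial>PiM I MM)"
    by (rule product_nn_integral_insert[OF insert.hyps meas])
  also have "\<dots> = (\<integral>\<^sup>+\<omega>. \<integral>\<^sup>+y. ennreal ((norm ((w + (\<Sum>i\<in>I. a i *\<^sub>R (U i (\<omega> i) - mm i))) + a j *\<^sub>R (U j y - mm j)))^2) \<partial>MM j \<partial>PiM I MM)"
  proof -
    have "\<And>\<omega> y. (\<Sum>i\<in>I. a i *\<^sub>R (U i (fun_upd \<omega> j y i) - mm i)) = (\<Sum>i\<in>I. a i *\<^sub>R (U i (\<omega> i) - mm i))"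
      using insert.hyps by (intro sum.cong) auto
    then show ?thesis using insert.hyps by (simp add: algebra_simps)
  qed
  also have "\<dots> \<le> (\<integral>\<^sup>+\<omega>. ennreal ((norm (w + (\<Sum>i\<in>I. a i *\<^sub>R (U i (\<omega> i) - mm i))))^2) + ?V \<partial>PiM I MM)"
    by (intro nn_integral_mono var_one P) (use insert.prems in auto)
  also have "\<dots> = (\<integral>\<^sup>+\<omega>. ennreal ((norm (w + (\<Sum>i\<in>I. a i *\<^sub>R (U i (\<omega> i) - mm i))))^2) \<partial>PiM I MM) + ?V"
    by (subst nn_integral_add) (use measI in \<open>auto simp: PI.emeasure_space_1\<close>)
  also have "\<dots> \<le> ennreal ((norm w)^2) + (\<Sum>i\<in>I. ennreal ((a i)^2) * (\<integral>\<^sup>+y. ennreal ((norm (U i y - mm i))^2) \<partial>MM i)) + ?V"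
    by (intro add_right_mono insert.IH) (use insert.prems in auto)
  finally show ?case using insert.hyps by (simp add: ac_simps)
qed

lemma var_prod:
  fixes U :: "'i \<Rightarrow> 'b \<Rightarrow> 'a::euclidean_space" and MM :: "'i \<Rightarrow> 'b measure"
  assumes I: "finite I" and P: "\<And>i. i \<in> I \<Longrightarrow> prob_space (MM i)"
    and iU: "\<And>i. i \<in> I \<Longrightarrow> integrable (MM i) (U i)"
    and mU: "\<And>i. i \<in> I \<Longrightarrow> (\<integral>y. U i y \<partial>MM i) = mm i"
  shows "(\<integral>\<^sup>+\<omega>. ennreal ((norm (w + (\<Sum>i\<in>I. a i *\<^sub>R (U i (\<omega> i) - mm i))))^2) \<partial>PiM I MM)
     \<le> ennreal ((norm w)^2) + (\<Sum>i\<in>I. ennreal ((a i)^2) * (\<integral>\<^sup>+y. ennreal ((norm (U i y - mm i))^2) \<partial>MM i))"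
proof -
  let ?M = "\<lambda>i. if i \<in> I then MM i else return (count_space UNIV) undefined"
  have eq: "PiM I MM = PiM I ?M" by (rule PiM_cong) auto
  have "(\<integral>\<^sup>+\<omega>. ennreal ((norm (w + (\<Sum>i\<in>I. a i *\<^sub>R (U i (\<omega> i) - mm i))))^2) \<partial>PiM I ?M)
     \<le> ennreal ((norm w)^2) + (\<Sum>i\<in>I. ennreal ((a i)^2) * (\<integral>\<^sup>+y. ennreal ((norm (U i y - mm i))^2) \<partial>?M i))"
    by (rule var_prod_core[OF I]) (auto simp: P iU mU intro: prob_space_return)
  moreover have "(\<Sum>i\<in>I. ennreal ((a i)^2) * (\<integral>\<^sup>+y. ennreal ((norm (U i y - mm i))^2) \<partial>?M i))
     = (\<Sum>i\<in>I. ennreal ((a i)^2) * (\<integral>\<^sup>+y. ennreal ((norm (U i y - mm i))^2) \<partial>MM i))"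
    by (rule sum.cong) auto
  ultimately show ?thesis by (simp add: eq)
qed


lemma inner_var:
  fixes D :: "'i \<Rightarrow> 'e \<Rightarrow> 'a::euclidean_space" and Q :: "'a \<Rightarrow> 'r \<Rightarrow> 'a"
    and ND :: "'i \<Rightarrow> 'e measure" and NQ :: "'r measure"
  assumes I: "finite I" and PD: "\<And>i. i \<in> I \<Longrightarrow> prob_space (ND i)" and PQ: "prob_space NQ"
    and iD: "\<And>i. i \<in> I \<Longrightarrow> integrable (ND i) (D i)"
    and mD: "\<And>i. i \<in> I \<Longrightarrow> (\<integral>e. D i e \<partial>ND i) = \<Delta> i"
    and Qm: "(\<lambda>(y, r). Q y r) \<in> borel \<Otimes>\<^sub>M NQ \<rightarrow>\<^sub>M borel"
    and iQ: "\<And>y. integrable NQ (Q y)"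
    and mQ: "\<And>y. (\<integral>r. Q y r \<partial>NQ) = y"
    and vQ: "\<And>y. (\<integral>\<^sup>+ r. ennreal ((norm (Q y r - y))^2) \<partial>NQ) \<le> ennreal (\<omega> * (norm y)^2)"
    and om: "\<omega> \<ge> 0"
  shows "(\<integral>\<^sup>+ \<xi>\<eta>. ennreal ((norm (w + (\<Sum>i\<in>I. a i *\<^sub>R (Q (D i (fst \<xi>\<eta> i)) (snd \<xi>\<eta> i) - \<Delta> i))))^2)
            \<partial>(PiM I ND \<Otimes>\<^sub>M PiM I (\<lambda>_. NQ)))
     \<le> ennreal ((norm w)^2) + (\<Sum>i\<in>I. ennreal ((a i)^2) *
           (ennreal (1 + \<omega>) * (\<integral>\<^sup>+e. ennreal ((norm (D i e - \<Delta> i))^2) \<partial>ND i) + ennreal (\<omega> * (norm (\<Delta> i))^2)))"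
proof -
  interpret PQI: prob_space "PiM I (\<lambda>_. NQ)" by (rule prob_space_PiM) (use PQ in auto)
  interpret PDI: prob_space "PiM I ND" by (rule prob_space_PiM) (use PD in auto)
  have mDi[measurable]: "\<And>i. i \<in> I \<Longrightarrow> D i \<in> borel_measurable (ND i)" using iD by auto
  note Qm[measurable]
  let ?V = "\<lambda>i. (\<integral>\<^sup>+e. ennreal ((norm (D i e - \<Delta> i))^2) \<partial>ND i)"
  let ?w = "\<lambda>\<xi>. w + (\<Sum>i\<in>I. a i *\<^sub>R (D i (\<xi> i) - \<Delta> i))"
  have meas: "(\<lambda>\<xi>\<eta>. ennreal ((norm (w + (\<Sum>i\<in>I. a i *\<^sub>R (Q (D i (fst \<xi>\<eta> i)) (snd \<xi>\<eta> i) - \<Delta> i))))^2))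
     \<in> borel_measurable (PiM I ND \<Otimes>\<^sub>M PiM I (\<lambda>_. NQ))"
    by measurable
  have "(\<integral>\<^sup>+ \<xi>\<eta>. ennreal ((norm (w + (\<Sum>i\<in>I. a i *\<^sub>R (Q (D i (fst \<xi>\<eta> i)) (snd \<xi>\<eta> i) - \<Delta> i))))^2)
            \<partial>(PiM I ND \<Otimes>\<^sub>M PiM I (\<lambda>_. NQ)))
     = (\<integral>\<^sup>+ \<xi>. \<integral>\<^sup>+ \<eta>. ennreal ((norm (w + (\<Sum>i\<in>I. a i *\<^sub>R (Q (D i (\<xi> i)) (\<eta> i) - \<Delta> i))))^2) \<partial>PiM I (\<lambda>_. NQ) \<partial>PiM I ND)"
    using PQI.nn_integral_fst[OF meas] by simp
  also have "\<dots> \<le> (\<integral>\<^sup>+ \<xi>. ennreal ((norm (?w \<xi>))^2) + (\<Sum>i\<in>I. ennreal ((a i)^2) * ennreal (\<omega> * (norm (D i (\<xi> i)))^2)) \<partial>PiM I ND)"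
  proof (rule nn_integral_mono)
    fix \<xi>
    have eq: "\<And>\<eta>. w + (\<Sum>i\<in>I. a i *\<^sub>R (Q (D i (\<xi> i)) (\<eta> i) - \<Delta> i))
       = ?w \<xi> + (\<Sum>i\<in>I. a i *\<^sub>R (Q (D i (\<xi> i)) (\<eta> i) - D i (\<xi> i)))"
      by (simp add: algebra_simps sum.distrib scaleR_diff_right sum_subtractf)
    have "(\<integral>\<^sup>+ \<eta>. ennreal ((norm (w + (\<Sum>i\<in>I. a i *\<^sub>R (Q (D i (\<xi> i)) (\<eta> i) - \<Delta> i))))^2) \<partial>PiM I (\<lambda>_. NQ))
      \<le> ennreal ((norm (?w \<xi>))^2) + (\<Sum>i\<in>I. ennreal ((a i)^2) * (\<integral>\<^sup>+r. ennreal ((norm (Q (D i (\<xi> i)) r - D i (\<xi> i)))^2) \<partial>NQ))"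
      unfolding eq by (rule var_prod[OF I]) (auto simp: PQ iQ mQ)
    also have "\<dots> \<le> ennreal ((norm (?w \<xi>))^2) + (\<Sum>i\<in>I. ennreal ((a i)^2) * ennreal (\<omega> * (norm (D i (\<xi> i)))^2))"
      by (intro add_left_mono sum_mono mult_left_mono vQ) auto
    finally show "(\<integral>\<^sup>+ \<eta>. ennreal ((norm (w + (\<Sum>i\<in>I. a i *\<^sub>R (Q (D i (\<xi> i)) (\<eta> i) - \<Delta> i))))^2) \<partial>PiM I (\<lambda>_. NQ))
      \<le> ennreal ((norm (?w \<xi>))^2) + (\<Sum>i\<in>I. ennreal ((a i)^2) * ennreal (\<omega> * (norm (D i (\<xi> i)))^2))" .
  qed
  also have "\<dots> = (\<integral>\<^sup>+ \<xi>. ennreal ((norm (?w \<xi>))^2) \<partial>PiM I ND)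
       + (\<Sum>i\<in>I. ennreal ((a i)^2) * ennreal \<omega> * (\<integral>\<^sup>+ \<xi>. ennreal ((norm (D i (\<xi> i)))^2) \<partial>PiM I ND))"
  proof -
    have "(\<integral>\<^sup>+ \<xi>. ennreal ((norm (?w \<xi>))^2) + (\<Sum>i\<in>I. ennreal ((a i)^2) * ennreal (\<omega> * (norm (D i (\<xi> i)))^2)) \<partial>PiM I ND)
      = (\<integral>\<^sup>+ \<xi>. ennreal ((norm (?w \<xi>))^2) \<partial>PiM I ND) + (\<integral>\<^sup>+ \<xi>. (\<Sum>i\<in>I. ennreal ((a i)^2) * ennreal (\<omega> * (norm (D i (\<xi> i)))^2)) \<partial>PiM I ND)"
      by (rule nn_integral_add) measurable
    also have "(\<integral>\<^sup>+ \<xi>. (\<Sum>i\<in>I. ennreal ((a i)^2) * ennreal (\<omega> * (norm (D i (\<xi> i)))^2)) \<partial>PiM I ND)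
      = (\<Sum>i\<in>I. (\<integral>\<^sup>+ \<xi>. ennreal ((a i)^2) * ennreal (\<omega> * (norm (D i (\<xi> i)))^2) \<partial>PiM I ND))"
      by (rule nn_integral_sum) measurable
    also have "\<dots> = (\<Sum>i\<in>I. ennreal ((a i)^2) * ennreal \<omega> * (\<integral>\<^sup>+ \<xi>. ennreal ((norm (D i (\<xi> i)))^2) \<partial>PiM I ND))"
    proof (rule sum.cong[OF refl])
      fix i assume i: "i \<in> I"
      have "(\<integral>\<^sup>+ \<xi>. ennreal ((a i)^2) * ennreal (\<omega> * (norm (D i (\<xi> i)))^2) \<partial>PiM I ND)
         = (\<integral>\<^sup>+ \<xi>. (ennreal ((a i)^2) * ennreal \<omega>) * ennreal ((norm (D i (\<xi> i)))^2) \<partial>PiM I ND)"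
        using om by (simp add: ennreal_mult mult.assoc)
      also have "\<dots> = ennreal ((a i)^2) * ennreal \<omega> * (\<integral>\<^sup>+ \<xi>. ennreal ((norm (D i (\<xi> i)))^2) \<partial>PiM I ND)"
        by (rule nn_integral_cmult) (use i in measurable)
      finally show "(\<integral>\<^sup>+ \<xi>. ennreal ((a i)^2) * ennreal (\<omega> * (norm (D i (\<xi> i)))^2) \<partial>PiM I ND)
         = ennreal ((a i)^2) * ennreal \<omega> * (\<integral>\<^sup>+ \<xi>. ennreal ((norm (D i (\<xi> i)))^2) \<partial>PiM I ND)" .
    qed
    finally show ?thesis .
  qed
  also have "\<dots> \<le> (ennreal ((norm w)^2) + (\<Sum>i\<in>I. ennreal ((a i)^2) * ?V i))
       + (\<Sum>i\<in>I. ennreal ((a i)^2) * ennreal \<omega> * (ennreal ((norm (\<Delta> i))^2) + ?V i))"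
  proof (intro add_mono sum_mono mult_left_mono)
    show "(\<integral>\<^sup>+ \<xi>. ennreal ((norm (?w \<xi>))^2) \<partial>PiM I ND) \<le> ennreal ((norm w)^2) + (\<Sum>i\<in>I. ennreal ((a i)^2) * ?V i)"
      by (rule var_prod[OF I]) (auto simp: PD iD mD)
  next
    fix i assume i: "i \<in> I"
    have eq: "\<And>\<xi>. D i (\<xi> i) = \<Delta> i + (\<Sum>j\<in>I. (if j = i then 1 else 0) *\<^sub>R (D j (\<xi> j) - \<Delta> j))"
    proof -
      fix \<xi> :: "'i \<Rightarrow> 'e"
      have "(\<Sum>j\<in>I. (if j = i then 1 else 0::real) *\<^sub>R (D j (\<xi> j) - \<Delta> j)) = (\<Sum>j\<in>I. if j = i then D j (\<xi> j) - \<Delta> j else 0)"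
        by (rule sum.cong) auto
      then show "D i (\<xi> i) = \<Delta> i + (\<Sum>j\<in>I. (if j = i then 1 else 0) *\<^sub>R (D j (\<xi> j) - \<Delta> j))"
        using i I by simp
    qed
    have "(\<integral>\<^sup>+ \<xi>. ennreal ((norm (D i (\<xi> i)))^2) \<partial>PiM I ND)
      \<le> ennreal ((norm (\<Delta> i))^2) + (\<Sum>j\<in>I. ennreal (((\<lambda>j. if j = i then 1 else 0) j)^2) * ?V j)"
      by (subst eq, rule var_prod[OF I]) (auto simp: PD iD mD)
    also have "(\<Sum>j\<in>I. ennreal (((\<lambda>j. if j = i then 1 else 0::real) j)^2) * ?V j) = ?V i"
    proof -
      have "(\<Sum>j\<in>I. ennreal (((\<lambda>j. if j = i then 1 else 0::real) j)^2) * ?V j) = (\<Sum>j\<in>I. if j = i then ?V j else 0)"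
        by (rule sum.cong) auto
      then show ?thesis using i I by simp
    qed
    finally show "(\<integral>\<^sup>+ \<xi>. ennreal ((norm (D i (\<xi> i)))^2) \<partial>PiM I ND) \<le> ennreal ((norm (\<Delta> i))^2) + ?V i" .
  qed simp_all
  also have "\<dots> = ennreal ((norm w)^2) + (\<Sum>i\<in>I. ennreal ((a i)^2) *
           (ennreal (1 + \<omega>) * ?V i + ennreal (\<omega> * (norm (\<Delta> i))^2)))"
  proof -
    have e1: "ennreal (1 + \<omega>) = 1 + ennreal \<omega>" using om by (simp add: ennreal_plus)
    have pt: "\<And>i. ennreal ((a i)^2) * ?V i + ennreal ((a i)^2) * ennreal \<omega> * (ennreal ((norm (\<Delta> i))^2) + ?V i)
       = ennreal ((a i)^2) * (ennreal (1 + \<omega>) * ?V i + ennreal (\<omega> * (norm (\<Delta> i))^2))"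
      unfolding e1 using om by (simp add: ennreal_mult algebra_simps)
    show ?thesis
      by (simp add: add.assoc pt[symmetric] sum.distrib)
  qed
  finally show ?thesis .
qed


lemma dir_deriv:
  fixes F :: "'a::euclidean_space \<Rightarrow> real"
  assumes "GDERIV F (x + t *\<^sub>R d) :> DF"
  shows "((\<lambda>s. F (x + s *\<^sub>R d)) has_real_derivative (d \<bullet> DF)) (at t)"
proof -
  have l: "((\<lambda>s. x + s *\<^sub>R d) has_derivative (\<lambda>s. s *\<^sub>R d)) (at t)"
    by (auto intro!: derivative_eq_intros)
  have H: "((\<lambda>s. F (x + s *\<^sub>R d)) has_derivative (\<lambda>s. (s *\<^sub>R d) \<bullet> DF)) (at t)"
    using has_derivative_compose[OF l assms[unfolded gderiv_def]] .
  have e: "(\<lambda>s. (s *\<^sub>R d) \<bullet> DF) = (\<lambda>s. (d \<bullet> DF) * s)"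
    by (rule ext) (simp only: inner_scaleR_left mult.commute)
  show ?thesis unfolding has_field_derivative_def using H[unfolded e] .
qed

lemma gderiv_cont:
  fixes F :: "'a::euclidean_space \<Rightarrow> real"
  assumes "\<And>y. GDERIV F y :> DF y"
  shows "continuous_on UNIV F"
  using assms unfolding gderiv_def
  by (meson continuous_at_imp_continuous_on has_derivative_continuous)

lemma gderiv_measurable:
  fixes F :: "'a::euclidean_space \<Rightarrow> real"
  assumes D: "\<And>y. GDERIV F y :> DF y"
  shows "DF \<in> borel_measurable borel"
proof -
  have Fm[measurable]: "F \<in> borel_measurable borel"
    by (rule borel_measurable_continuous_onI[OF gderiv_cont[OF D]])
  show ?thesis
  proof (rule borel_measurable_euclidean_space[THEN iffD2], rule ballI)
    fix b :: 'a assume b: "b \<in> Basis"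
    show "(\<lambda>y. DF y \<bullet> b) \<in> borel_measurable borel"
    proof (rule borel_measurable_LIMSEQ_real[where u = "\<lambda>n y. (F (y + inverse (real (Suc n)) *\<^sub>R b) - F y) * real (Suc n)"])
      fix y :: 'a
      have "((\<lambda>s. F (y + s *\<^sub>R b)) has_real_derivative (b \<bullet> DF y)) (at 0)"
        by (rule dir_deriv) (use D in simp)
      then have lim: "(\<lambda>h. (F (y + (0 + h) *\<^sub>R b) - F (y + 0 *\<^sub>R b)) / h) \<midarrow>0\<rightarrow> b \<bullet> DF y"
        unfolding DERIV_def .
      have seq: "filterlim (\<lambda>n. inverse (real (Suc n))) (at 0) sequentially"
        unfolding filterlim_at using LIMSEQ_inverse_real_of_nat by simp
      have "(\<lambda>n. (F (y + (0 + inverse (real (Suc n))) *\<^sub>R b) - F (y + 0 *\<^sub>R b)) / inverse (real (Suc n))) \<longlonglongrightarrow> b \<bullet> DF y"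
        using filterlim_compose[OF lim seq] by simp
      then show "(\<lambda>n. (F (y + inverse (real (Suc n)) *\<^sub>R b) - F y) * real (Suc n)) \<longlonglongrightarrow> DF y \<bullet> b"
        by (simp add: divide_inverse inner_commute)
    next
      fix n
      show "(\<lambda>y. (F (y + inverse (real (Suc n)) *\<^sub>R b) - F y) * real (Suc n)) \<in> borel_measurable borel"
        by measurable
    qed
  qed
qed

lemma descent:
  fixes F :: "'a::euclidean_space \<Rightarrow> real"
  assumes D: "\<And>y. GDERIV F y :> DF y" and Lip: "\<And>y z. norm (DF y - DF z) \<le> L * norm (y - z)"
  shows "F y \<le> F x + DF x \<bullet> (y - x) + L / 2 * (norm (y - x))^2"
proof -
  define d where "d = y - x"
  define h where "h t = F (x + t *\<^sub>R d) - t * (DF x \<bullet> d) - L / 2 * t^2 * (norm d)^2" for t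
  have "h 1 \<le> h 0"
  proof (rule DERIV_nonpos_imp_nonincreasing[of 0 1])
    fix t :: real assume t: "0 \<le> t" "t \<le> 1"
    have "(h has_real_derivative (d \<bullet> DF (x + t *\<^sub>R d) - DF x \<bullet> d - L / 2 * (2 * t) * (norm d)^2)) (at t)"
    proof -
      have dd: "((\<lambda>z. F (x + z *\<^sub>R d)) has_real_derivative d \<bullet> DF (x + t *\<^sub>R d)) (at t)"
        by (rule dir_deriv) (rule D)
      have d2: "((\<lambda>s. s * (DF x \<bullet> d)) has_real_derivative (DF x \<bullet> d)) (at t)"
        by (auto intro!: derivative_eq_intros)
      have d3: "((\<lambda>s. L / 2 * s^2 * (norm d)^2) has_real_derivative (L / 2 * (2 * t) * (norm d)^2)) (at t)"
        by (auto intro!: derivative_eq_intros)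
      show ?thesis unfolding h_def
        using DERIV_diff[OF DERIV_diff[OF dd d2] d3] by simp
    qed
    moreover have "d \<bullet> DF (x + t *\<^sub>R d) - DF x \<bullet> d - L / 2 * (2 * t) * (norm d)^2 \<le> 0"
    proof -
      have "d \<bullet> DF (x + t *\<^sub>R d) - DF x \<bullet> d = d \<bullet> (DF (x + t *\<^sub>R d) - DF x)"
        by (simp add: inner_diff_right inner_commute[of d])
      also have "\<dots> \<le> norm d * norm (DF (x + t *\<^sub>R d) - DF x)"
        by (rule norm_cauchy_schwarz)
      also have "\<dots> \<le> norm d * (L * norm (t *\<^sub>R d))"
      proof -
        have "norm (DF (x + t *\<^sub>R d) - DF x) \<le> L * norm (x + t *\<^sub>R d - x)" by (rule Lip)
        then have "norm (DF (x + t *\<^sub>R d) - DF x) \<le> L * norm (t *\<^sub>R d)" by simp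
        then show ?thesis by (rule mult_left_mono) simp
      qed
      also have "\<dots> = L / 2 * (2 * t) * (norm d)^2"
        using t by (simp add: power2_eq_square)
      finally show ?thesis by simp
    qed
    ultimately show "\<exists>y. (h has_real_derivative y) (at t) \<and> y \<le> 0" by blast
  qed simp
  then have "F (x + d) - DF x \<bullet> d - L / 2 * (norm d)^2 \<le> F x" unfolding h_def by simp
  moreover have "F (x + d) = F y" by (simp add: d_def)
  ultimately show ?thesis unfolding d_def[symmetric] by linarith
qed


lemma bern_split:
  fixes h :: "bool \<times> 'b \<Rightarrow> ennreal"
  assumes p: "0 \<le> p" "p \<le> 1" and N: "prob_space N"
    and h: "h \<in> borel_measurable (measure_pmf (bernoulli_pmf p) \<Otimes>\<^sub>M N)"
  shows "(\<integral>\<^sup>+w. h w \<partial>(measure_pmf (bernoulli_pmf p) \<Otimes>\<^sub>M N))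
     = ennreal p * (\<integral>\<^sup>+y. h (True, y) \<partial>N) + ennreal (1 - p) * (\<integral>\<^sup>+y. h (False, y) \<partial>N)"
proof -
  interpret prob_space N by fact
  have "(\<integral>\<^sup>+w. h w \<partial>(measure_pmf (bernoulli_pmf p) \<Otimes>\<^sub>M N))
      = (\<integral>\<^sup>+c. \<integral>\<^sup>+y. h (c, y) \<partial>N \<partial>measure_pmf (bernoulli_pmf p))"
    by (rule nn_integral_fst[OF h, symmetric])
  also have "\<dots> = ennreal p * (\<integral>\<^sup>+y. h (True, y) \<partial>N) + ennreal (1 - p) * (\<integral>\<^sup>+y. h (False, y) \<partial>N)"
    using p by (simp add: mult.commute)
  finally show ?thesis .
qed

lemma fresh_prod:
  fixes h :: "'x \<times> 'v \<Rightarrow> ennreal"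
  assumes M: "prob_space M" and sub: "subalgebra M Fk" and Pw: "prob_space Pw"
    and X: "X \<in> Fk \<rightarrow>\<^sub>M SX" and W: "W \<in> M \<rightarrow>\<^sub>M Pw"
    and ind: "\<And>A S. A \<in> sets Fk \<Longrightarrow> S \<in> sets Pw \<Longrightarrow>
        measure M (A \<inter> {\<omega> \<in> space M. W \<omega> \<in> S}) = measure M A * measure Pw S"
    and h: "h \<in> borel_measurable (SX \<Otimes>\<^sub>M Pw)"
  shows "(\<integral>\<^sup>+\<omega>. h (X \<omega>, W \<omega>) \<partial>M) = (\<integral>\<^sup>+x. \<integral>\<^sup>+w. h (x, w) \<partial>Pw \<partial>distr M SX X)"
proof -
  interpret M: prob_space M by fact
  interpret Pw: prob_space Pw by fact
  have XM: "X \<in> M \<rightarrow>\<^sub>M SX" by (rule measurable_from_subalg[OF sub X])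
  interpret D: prob_space "distr M SX X" by (rule M.prob_space_distr[OF XM])
  have spF: "space Fk = space M" and sF: "sets Fk \<subseteq> sets M" using sub by (auto simp: subalgebra_def)
  have XW: "(\<lambda>\<omega>. (X \<omega>, W \<omega>)) \<in> M \<rightarrow>\<^sub>M SX \<Otimes>\<^sub>M Pw"
    using XM W by (rule measurable_Pair)
  have jd: "distr M SX X \<Otimes>\<^sub>M Pw = distr M (SX \<Otimes>\<^sub>M Pw) (\<lambda>\<omega>. (X \<omega>, W \<omega>))"
  proof (rule pair_measure_eqI)
    show "sigma_finite_measure (distr M SX X)"
      by (rule prob_space_imp_sigma_finite[OF M.prob_space_distr[OF XM]])
    show "sigma_finite_measure Pw" using Pw by (rule prob_space_imp_sigma_finite)
    show "sets (distr M SX X \<Otimes>\<^sub>M Pw) = sets (distr M (SX \<Otimes>\<^sub>M Pw) (\<lambda>\<omega>. (X \<omega>, W \<omega>)))"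
      by (metis sets_distr sets_pair_measure_cong)
  next
    fix A B assume A: "A \<in> sets (distr M SX X)" and B: "B \<in> sets Pw"
    have A': "A \<in> sets SX" using A by simp
    have pre: "X -` A \<inter> space Fk \<in> sets Fk" using X A' by (rule measurable_sets)
    have eq: "(\<lambda>\<omega>. (X \<omega>, W \<omega>)) -` (A \<times> B) \<inter> space M = (X -` A \<inter> space M) \<inter> {\<omega> \<in> space M. W \<omega> \<in> B}"
      by auto
    have "emeasure (distr M (SX \<Otimes>\<^sub>M Pw) (\<lambda>\<omega>. (X \<omega>, W \<omega>))) (A \<times> B)
        = emeasure M ((\<lambda>\<omega>. (X \<omega>, W \<omega>)) -` (A \<times> B) \<inter> space M)"
      using A' B XW by (intro emeasure_distr) auto
    also have "\<dots> = ennreal (measure M ((X -` A \<inter> space M) \<inter> {\<omega> \<in> space M. W \<omega> \<in> B}))"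
      unfolding eq by (rule M.emeasure_eq_measure)
    also have "\<dots> = ennreal (measure M (X -` A \<inter> space M) * measure Pw B)"
      using ind[OF pre[unfolded spF] B] by simp
    also have "\<dots> = emeasure (distr M SX X) A * emeasure Pw B"
      using A' XM by (simp add: emeasure_distr M.emeasure_eq_measure Pw.emeasure_eq_measure ennreal_mult)
    finally show "emeasure (distr M SX X) A * emeasure Pw B
        = emeasure (distr M (SX \<Otimes>\<^sub>M Pw) (\<lambda>\<omega>. (X \<omega>, W \<omega>))) (A \<times> B)" by simp
  qed
  have "(\<integral>\<^sup>+\<omega>. h (X \<omega>, W \<omega>) \<partial>M) = (\<integral>\<^sup>+z. h z \<partial>distr M (SX \<Otimes>\<^sub>M Pw) (\<lambda>\<omega>. (X \<omega>, W \<omega>)))"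
    using h XW by (simp add: nn_integral_distr)
  also have "\<dots> = (\<integral>\<^sup>+z. h z \<partial>(distr M SX X \<Otimes>\<^sub>M Pw))" by (simp add: jd)
  also have "\<dots> = (\<integral>\<^sup>+x. \<integral>\<^sup>+w. h (x, w) \<partial>Pw \<partial>distr M SX X)"
  proof (rule Pw.nn_integral_fst[symmetric])
    show "h \<in> borel_measurable (distr M SX X \<Otimes>\<^sub>M Pw)"
      using h by (simp add: measurable_cong_sets[OF sets_pair_measure_cong[OF sets_distr refl] refl])
  qed
  finally show ?thesis .
qed


lemma norm_diff_sq: "(norm (a - b))^2 = (norm a)^2 - 2 * (a \<bullet> b) + (norm (b::'a::real_inner))^2"
  by (simp add: power2_norm_eq_inner inner_diff_left inner_diff_right inner_commute)

lemma sq_young: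
  fixes u v :: "'a::real_inner"
  assumes t: "t > 0"
  shows "(norm (u + v))^2 \<le> (1 + t) * (norm u)^2 + (1 + 1 / t) * (norm v)^2"
proof -
  have "2 * (u \<bullet> v) \<le> t * (norm u)^2 + (1 / t) * (norm v)^2"
  proof -
    have "0 \<le> (norm (sqrt t *\<^sub>R u - (1 / sqrt t) *\<^sub>R v))^2" by simp
    also have "\<dots> = (norm (sqrt t *\<^sub>R u))^2 - 2 * ((sqrt t *\<^sub>R u) \<bullet> ((1 / sqrt t) *\<^sub>R v)) + (norm ((1 / sqrt t) *\<^sub>R v))^2"
      by (rule norm_diff_sq)
    also have "(norm (sqrt t *\<^sub>R u))^2 = t * (norm u)^2"
      using t by (simp add: power_mult_distrib)
    also have "(sqrt t *\<^sub>R u) \<bullet> ((1 / sqrt t) *\<^sub>R v) = u \<bullet> v"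
      using t by simp
    also have "(norm ((1 / sqrt t) *\<^sub>R v))^2 = (1 / t) * (norm v)^2"
      using t by (simp add: power_mult_distrib power_divide)
    finally show ?thesis by simp
  qed
  then show ?thesis
    by (simp add: power2_norm_eq_inner inner_add_left inner_add_right inner_commute algebra_simps)
qed

lemma pair_sum_identity:
  fixes u :: "nat \<Rightarrow> 'a::real_inner"
  assumes I: "finite I"
  shows "(\<Sum>i\<in>I. \<Sum>l\<in>I. (norm (u i - u l))^2)
       = 2 * real (card I) * (\<Sum>i\<in>I. (norm (u i))^2) - 2 * (norm (\<Sum>i\<in>I. u i))^2"
proof -
  have "\<And>i l. (norm (u i - u l))^2 = (norm (u i))^2 + (norm (u l))^2 - 2 * (u i \<bullet> u l)"
    by (simp add: power2_norm_eq_inner inner_diff_left inner_diff_right inner_commute)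
  then have "(\<Sum>i\<in>I. \<Sum>l\<in>I. (norm (u i - u l))^2)
      = (\<Sum>i\<in>I. \<Sum>l\<in>I. (norm (u i))^2 + (norm (u l))^2 - 2 * (u i \<bullet> u l))" by simp
  also have "\<dots> = real (card I) * (\<Sum>i\<in>I. (norm (u i))^2) + real (card I) * (\<Sum>l\<in>I. (norm (u l))^2)
       - 2 * (\<Sum>i\<in>I. \<Sum>l\<in>I. u i \<bullet> u l)"
  proof -
    have "(\<Sum>i\<in>I. \<Sum>l\<in>I. (norm (u i))^2 + (norm (u l))^2 - 2 * (u i \<bullet> u l))
        = (\<Sum>i\<in>I. real (card I) * (norm (u i))^2 + (\<Sum>l\<in>I. (norm (u l))^2) - 2 * (\<Sum>l\<in>I. u i \<bullet> u l))"
      by (simp add: sum.distrib sum_subtractf sum_distrib_left)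
    also have "\<dots> = real (card I) * (\<Sum>i\<in>I. (norm (u i))^2) + real (card I) * (\<Sum>l\<in>I. (norm (u l))^2)
       - 2 * (\<Sum>i\<in>I. \<Sum>l\<in>I. u i \<bullet> u l)"
      by (simp add: sum.distrib sum_subtractf sum_distrib_left)
    finally show ?thesis .
  qed
  also have "(\<Sum>i\<in>I. \<Sum>l\<in>I. u i \<bullet> u l) = (norm (\<Sum>i\<in>I. u i))^2"
  proof -
    have "(\<Sum>i\<in>I. \<Sum>l\<in>I. u i \<bullet> u l) = (\<Sum>i\<in>I. u i \<bullet> (\<Sum>l\<in>I. u l))"
      by (simp only: inner_sum_right)
    also have "\<dots> = (\<Sum>i\<in>I. u i) \<bullet> (\<Sum>l\<in>I. u l)"
      by (simp only: inner_sum_left)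
    finally show ?thesis by (simp add: power2_norm_eq_inner)
  qed
  finally show ?thesis by simp
qed

lemma pair_sum_le:
  fixes u :: "nat \<Rightarrow> 'a::real_inner"
  assumes I: "finite I"
  shows "(\<Sum>i\<in>I. \<Sum>l\<in>I. (norm (u i - u l))^2) \<le> 2 * real (card I) * (\<Sum>i\<in>I. (norm (u i - c))^2)"
proof -
  have "(\<Sum>i\<in>I. \<Sum>l\<in>I. (norm (u i - u l))^2) = (\<Sum>i\<in>I. \<Sum>l\<in>I. (norm ((u i - c) - (u l - c)))^2)"
    by simp
  also have "\<dots> = 2 * real (card I) * (\<Sum>i\<in>I. (norm (u i - c))^2) - 2 * (norm (\<Sum>i\<in>I. u i - c))^2"
    by (rule pair_sum_identity[OF I])
  finally show ?thesis by simp
qed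

lemma mean_var:
  fixes u :: "nat \<Rightarrow> 'a::real_inner"
  assumes I: "finite I" and c: "real (card I) *\<^sub>R c = (\<Sum>i\<in>I. u i)"
  shows "(\<Sum>i\<in>I. (norm (u i - c))^2) = (\<Sum>i\<in>I. (norm (u i))^2) - real (card I) * (norm c)^2"
proof -
  have "\<And>i. (norm (u i - c))^2 = (norm (u i))^2 - 2 * (u i \<bullet> c) + (norm c)^2"
    by (simp add: power2_norm_eq_inner inner_diff_left inner_diff_right inner_commute)
  then have "(\<Sum>i\<in>I. (norm (u i - c))^2) = (\<Sum>i\<in>I. (norm (u i))^2) - 2 * ((\<Sum>i\<in>I. u i) \<bullet> c) + real (card I) * (norm c)^2"
    by (simp add: sum.distrib sum_subtractf sum_distrib_left inner_sum_left)
  also have "(\<Sum>i\<in>I. u i) \<bullet> c = real (card I) * (norm c)^2"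
    unfolding c[symmetric] by (simp add: power2_norm_eq_inner)
  finally show ?thesis by simp
qed

lemma ennreal_div_le_imp:
  assumes "S / ennreal G \<le> ennreal X" "G > 0" "X \<ge> 0"
  shows "S \<le> ennreal (G * X)"
proof -
  have "S = S * (ennreal G / ennreal G)" using assms(2) by simp
  also have "\<dots> = (S / ennreal G) * ennreal G" by (simp add: ennreal_divide_times)
  also have "\<dots> \<le> ennreal X * ennreal G" by (rule mult_right_mono[OF assms(1)]) simp
  finally show ?thesis using assms by (simp add: ennreal_mult mult.commute)
qed


definition phi :: "(nat \<Rightarrow> 'a \<Rightarrow> 'a) \<Rightarrow> ('a \<Rightarrow> 'r \<Rightarrow> 'a) \<Rightarrow> (nat \<Rightarrow> 'a \<Rightarrow> 'a \<Rightarrow> 'e \<Rightarrow> 'a)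
    \<Rightarrow> nat \<Rightarrow> 'a \<Rightarrow> 'a \<Rightarrow> 'a::real_vector \<Rightarrow> bool \<times> (nat \<Rightarrow> 'e) \<times> (nat \<Rightarrow> 'r) \<Rightarrow> 'a" where
  "phi gfi Q Dh i y x g w = (if fst w then gfi i y else g + Q (Dh i y x (fst (snd w) i)) (snd (snd w) i))"

locale marina_inner =
  fixes Gs :: "nat set" and gfi :: "nat \<Rightarrow> 'a::euclidean_space \<Rightarrow> 'a" and gf :: "'a \<Rightarrow> 'a"
    and Dh :: "nat \<Rightarrow> 'a \<Rightarrow> 'a \<Rightarrow> 'e \<Rightarrow> 'a" and ND :: "nat \<Rightarrow> 'e measure"
    and Q :: "'a \<Rightarrow> 'r \<Rightarrow> 'a" and NQ :: "'r measure"
    and L Lpm LL bb \<omega> B \<zeta> :: real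
  assumes fin: "finite Gs" and G2: "card Gs \<ge> 2"
    and gf_eq: "\<And>y. gf y = (1 / real (card Gs)) *\<^sub>R (\<Sum>i\<in>Gs. gfi i y)"
    and gfim: "\<And>i. i \<in> Gs \<Longrightarrow> gfi i \<in> borel_measurable borel"
    and Lip: "\<And>y z. norm (gf y - gf z) \<le> L * norm (y - z)"
    and A2: "\<And>y. (\<Sum>i\<in>Gs. (norm (gfi i y - gf y))^2) / real (card Gs) \<le> B * (norm (gf y))^2 + \<zeta>^2"
    and A3: "\<And>y z. (\<Sum>i\<in>Gs. (norm (gfi i y - gfi i z))^2) / real (card Gs)
                 - (norm (gf y - gf z))^2 \<le> Lpm^2 * (norm (y - z))^2"
    and PD: "\<And>i. i \<in> Gs \<Longrightarrow> prob_space (ND i)"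
    and Dmj: "\<And>i. i \<in> Gs \<Longrightarrow> (\<lambda>(y, z, e). Dh i y z e) \<in> borel \<Otimes>\<^sub>M borel \<Otimes>\<^sub>M ND i \<rightarrow>\<^sub>M borel"
    and iD: "\<And>i y z. i \<in> Gs \<Longrightarrow> integrable (ND i) (Dh i y z)"
    and mD: "\<And>i y z. i \<in> Gs \<Longrightarrow> (\<integral>e. Dh i y z e \<partial>ND i) = gfi i y - gfi i z"
    and vD: "\<And>y z. (\<Sum>i\<in>Gs. \<integral>\<^sup>+ e. ennreal ((norm (Dh i y z e - (gfi i y - gfi i z)))^2) \<partial>ND i) / ennreal (real (card Gs))
               \<le> ennreal (LL^2 / bb * (norm (y - z))^2)"
    and bb: "bb > 0"
    and PQ: "prob_space NQ" and om: "\<omega> \<ge> 0"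
    and Qm: "(\<lambda>(y, r). Q y r) \<in> borel \<Otimes>\<^sub>M NQ \<rightarrow>\<^sub>M borel"
    and iQ: "\<And>y. integrable NQ (Q y)"
    and mQ: "\<And>y. (\<integral>r. Q y r \<partial>NQ) = y"
    and vQ: "\<And>y. (\<integral>\<^sup>+ r. ennreal ((norm (Q y r - y))^2) \<partial>NQ) \<le> ennreal (\<omega> * (norm y)^2)"
begin

abbreviation "G \<equiv> real (card Gs)"
abbreviation "Wt y x i \<equiv> ennreal (1 + \<omega>) * (\<integral>\<^sup>+e. ennreal ((norm (Dh i y x e - (gfi i y - gfi i x)))^2) \<partial>ND i)
     + ennreal (\<omega> * (norm (gfi i y - gfi i x))^2)"

lemma Gpos: "G > 0" using G2 by simp

lemma sum_Delta: "(\<Sum>i\<in>Gs. gfi i y - gfi i x) = G *\<^sub>R (gf y - gf x)"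
  using Gpos by (simp add: gf_eq sum_subtractf scaleR_diff_right[symmetric])

lemma sumD_sq: "(\<Sum>i\<in>Gs. (norm (gfi i y - gfi i x))^2) \<le> G * ((norm (gf y - gf x))^2 + Lpm^2 * (norm (y - x))^2)"
  using A3[of y x] Gpos by (simp add: field_simps)

lemma gf_sq: "(norm (gf y - gf x))^2 \<le> L^2 * (norm (y - x))^2"
proof -
  have "norm (gf y - gf x) \<le> L * norm (y - x)" by (rule Lip)
  then have "(norm (gf y - gf x))^2 \<le> (L * norm (y - x))^2" by (rule power_mono) simp
  then show ?thesis by (simp add: power_mult_distrib)
qed

lemma sum_W: "(\<Sum>i\<in>Gs. Wt y x i) \<le> ennreal (G * ((1 + \<omega>) * (LL^2 / bb) + \<omega> * (L^2 + Lpm^2)) * (norm (y - x))^2)"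
proof -
  let ?V = "\<lambda>i. (\<integral>\<^sup>+e. ennreal ((norm (Dh i y x e - (gfi i y - gfi i x)))^2) \<partial>ND i)"
  have sV: "(\<Sum>i\<in>Gs. ?V i) \<le> ennreal (G * (LL^2 / bb * (norm (y - x))^2))"
    by (rule ennreal_div_le_imp[OF vD Gpos]) (use bb in simp)
  have sD: "(\<Sum>i\<in>Gs. (norm (gfi i y - gfi i x))^2) \<le> G * ((L^2 + Lpm^2) * (norm (y - x))^2)"
  proof -
    have "(\<Sum>i\<in>Gs. (norm (gfi i y - gfi i x))^2) \<le> G * ((norm (gf y - gf x))^2 + Lpm^2 * (norm (y - x))^2)"
      by (rule sumD_sq)
    also have "\<dots> \<le> G * (L^2 * (norm (y - x))^2 + Lpm^2 * (norm (y - x))^2)"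
      by (intro mult_left_mono add_right_mono gf_sq) (use Gpos in simp)
    finally show ?thesis by (simp add: algebra_simps)
  qed
  have "(\<Sum>i\<in>Gs. Wt y x i) = ennreal (1 + \<omega>) * (\<Sum>i\<in>Gs. ?V i) + ennreal (\<omega> * (\<Sum>i\<in>Gs. (norm (gfi i y - gfi i x))^2))"
    using om by (simp add: sum.distrib sum_distrib_left sum_nonneg)
  also have "\<dots> \<le> ennreal (1 + \<omega>) * ennreal (G * (LL^2 / bb * (norm (y - x))^2))
      + ennreal (\<omega> * (G * ((L^2 + Lpm^2) * (norm (y - x))^2)))"
    by (rule add_mono[OF mult_left_mono[OF sV] ennreal_leI[OF mult_left_mono[OF sD om]]]) simp
  also have "\<dots> = ennreal (G * ((1 + \<omega>) * (LL^2 / bb) + \<omega> * (L^2 + Lpm^2)) * (norm (y - x))^2)"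
  proof -
    have n1: "0 \<le> G * (LL^2 / bb * (norm (y - x))^2)" using bb Gpos by simp
    have n2: "0 \<le> \<omega> * (G * ((L^2 + Lpm^2) * (norm (y - x))^2))" using om Gpos by simp
    have "ennreal (1 + \<omega>) * ennreal (G * (LL^2 / bb * (norm (y - x))^2))
        = ennreal ((1 + \<omega>) * (G * (LL^2 / bb * (norm (y - x))^2)))"
      by (rule ennreal_mult[symmetric]) (use om n1 in auto)
    moreover have "ennreal ((1 + \<omega>) * (G * (LL^2 / bb * (norm (y - x))^2))) + ennreal (\<omega> * (G * ((L^2 + Lpm^2) * (norm (y - x))^2)))
        = ennreal ((1 + \<omega>) * (G * (LL^2 / bb * (norm (y - x))^2)) + \<omega> * (G * ((L^2 + Lpm^2) * (norm (y - x))^2)))"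
      by (rule ennreal_plus[symmetric]) (use n2 mult_nonneg_nonneg[OF _ n1, of "1 + \<omega>"] om in auto)
    moreover have "(1 + \<omega>) * (G * (LL^2 / bb * (norm (y - x))^2)) + \<omega> * (G * ((L^2 + Lpm^2) * (norm (y - x))^2))
        = G * ((1 + \<omega>) * (LL^2 / bb) + \<omega> * (L^2 + Lpm^2)) * (norm (y - x))^2"
      by (simp add: algebra_simps)
    ultimately show ?thesis by simp
  qed
  finally show ?thesis .
qed


lemma Dm1[measurable]: "i \<in> Gs \<Longrightarrow> Dh i y z \<in> borel_measurable (ND i)"
  using iD by auto

lemma Qm1[measurable]: "(\<lambda>(y, r). Q y r) \<in> borel \<Otimes>\<^sub>M NQ \<rightarrow>\<^sub>M borel"
  by (rule Qm)

lemma phi_meas[measurable]: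
  assumes "i \<in> Gs"
  shows "(\<lambda>w. phi gfi Q Dh i y x g w) \<in> borel_measurable (measure_pmf (bernoulli_pmf p) \<Otimes>\<^sub>M (PiM Gs ND \<Otimes>\<^sub>M PiM Gs (\<lambda>_. NQ)))"
  unfolding phi_def using assms by measurable

lemma Qpair_meas[measurable]:
  assumes "i \<in> Gs"
  shows "(\<lambda>v. Q (Dh i y x (fst v i)) (snd v i)) \<in> borel_measurable (PiM Gs ND \<Otimes>\<^sub>M PiM Gs (\<lambda>_. NQ))"
  using assms by measurable


abbreviation "Pw p \<equiv> measure_pmf (bernoulli_pmf p) \<Otimes>\<^sub>M (PiM Gs ND \<Otimes>\<^sub>M PiM Gs (\<lambda>_. NQ))"

lemma prob_inner: "prob_space (PiM Gs ND \<Otimes>\<^sub>M PiM Gs (\<lambda>_. NQ))"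
proof -
  interpret A: prob_space "PiM Gs ND" by (rule prob_space_PiM) (use PD in auto)
  interpret B: prob_space "PiM Gs (\<lambda>_. NQ)" by (rule prob_space_PiM) (use PQ in auto)
  interpret pair_prob_space "PiM Gs ND" "PiM Gs (\<lambda>_. NQ)" ..
  show ?thesis by (rule prob_space_axioms)
qed

lemma inner_var_inst:
  "(\<integral>\<^sup>+ v. ennreal ((norm (w + (\<Sum>i\<in>Gs. a i *\<^sub>R (Q (Dh i y x (fst v i)) (snd v i) - (gfi i y - gfi i x)))))^2)
            \<partial>(PiM Gs ND \<Otimes>\<^sub>M PiM Gs (\<lambda>_. NQ)))
     \<le> ennreal ((norm w)^2) + (\<Sum>i\<in>Gs. ennreal ((a i)^2) * Wt y x i)"
  by (rule inner_var[OF fin PD PQ iD mD Qm iQ mQ vQ om])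

lemma I1:
  assumes p: "0 \<le> p" "p \<le> 1"
  shows "(\<integral>\<^sup>+w. ennreal ((norm ((1 / G) *\<^sub>R (\<Sum>i\<in>Gs. phi gfi Q Dh i y x g w) - gf y))^2) \<partial>Pw p)
     \<le> ennreal (1 - p) * ennreal ((norm (g - gf x))^2 + ((1 + \<omega>) * (LL^2 / bb) + \<omega> * (L^2 + Lpm^2)) / G * (norm (y - x))^2)"
proof -
  let ?Sx = "(1 + \<omega>) * (LL^2 / bb) + \<omega> * (L^2 + Lpm^2)"
  have meas: "(\<lambda>w. ennreal ((norm ((1 / G) *\<^sub>R (\<Sum>i\<in>Gs. phi gfi Q Dh i y x g w) - gf y))^2)) \<in> borel_measurable (Pw p)"
    by measurable
  have T: "\<And>v. ennreal ((norm ((1 / G) *\<^sub>R (\<Sum>i\<in>Gs. phi gfi Q Dh i y x g (True, v)) - gf y))^2) = 0"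
    by (simp add: phi_def gf_eq)
  have F: "\<And>v. (1 / G) *\<^sub>R (\<Sum>i\<in>Gs. phi gfi Q Dh i y x g (False, v)) - gf y
      = (g - gf x) + (\<Sum>i\<in>Gs. (1 / G) *\<^sub>R (Q (Dh i y x (fst v i)) (snd v i) - (gfi i y - gfi i x)))"
  proof -
    fix v :: "(nat \<Rightarrow> 'e) \<times> (nat \<Rightarrow> 'r)"
    have s1: "(\<Sum>i\<in>Gs. phi gfi Q Dh i y x g (False, v)) = G *\<^sub>R g + (\<Sum>i\<in>Gs. Q (Dh i y x (fst v i)) (snd v i))"
      by (simp add: phi_def sum.distrib sum_constant_scaleR)
    have s2: "(\<Sum>i\<in>Gs. (1 / G) *\<^sub>R (Q (Dh i y x (fst v i)) (snd v i) - (gfi i y - gfi i x)))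
       = (1 / G) *\<^sub>R (\<Sum>i\<in>Gs. Q (Dh i y x (fst v i)) (snd v i)) - (1 / G) *\<^sub>R (\<Sum>i\<in>Gs. gfi i y - gfi i x)"
      by (simp add: scaleR_sum_right[symmetric] sum_subtractf scaleR_diff_right)
    show "(1 / G) *\<^sub>R (\<Sum>i\<in>Gs. phi gfi Q Dh i y x g (False, v)) - gf y
      = (g - gf x) + (\<Sum>i\<in>Gs. (1 / G) *\<^sub>R (Q (Dh i y x (fst v i)) (snd v i) - (gfi i y - gfi i x)))"
      unfolding s1 s2 sum_Delta using Gpos by (simp add: scaleR_add_right algebra_simps)
  qed
  have "(\<integral>\<^sup>+w. ennreal ((norm ((1 / G) *\<^sub>R (\<Sum>i\<in>Gs. phi gfi Q Dh i y x g w) - gf y))^2) \<partial>Pw p)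
      = ennreal p * (\<integral>\<^sup>+v. ennreal ((norm ((1 / G) *\<^sub>R (\<Sum>i\<in>Gs. phi gfi Q Dh i y x g (True, v)) - gf y))^2) \<partial>(PiM Gs ND \<Otimes>\<^sub>M PiM Gs (\<lambda>_. NQ)))
      + ennreal (1 - p) * (\<integral>\<^sup>+v. ennreal ((norm ((1 / G) *\<^sub>R (\<Sum>i\<in>Gs. phi gfi Q Dh i y x g (False, v)) - gf y))^2) \<partial>(PiM Gs ND \<Otimes>\<^sub>M PiM Gs (\<lambda>_. NQ)))"
    by (rule bern_split[OF p prob_inner meas])
  also have "\<dots> = ennreal (1 - p) * (\<integral>\<^sup>+v. ennreal ((norm ((g - gf x) + (\<Sum>i\<in>Gs. (1 / G) *\<^sub>R (Q (Dh i y x (fst v i)) (snd v i) - (gfi i y - gfi i x)))))^2) \<partial>(PiM Gs ND \<Otimes>\<^sub>M PiM Gs (\<lambda>_. NQ)))"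
    by (simp only: T F) simp
  also have "\<dots> \<le> ennreal (1 - p) * (ennreal ((norm (g - gf x))^2) + (\<Sum>i\<in>Gs. ennreal ((1 / G)^2) * Wt y x i))"
    by (rule mult_left_mono[OF inner_var_inst]) simp
  also have "(\<Sum>i\<in>Gs. ennreal ((1 / G)^2) * Wt y x i) = ennreal ((1 / G)^2) * (\<Sum>i\<in>Gs. Wt y x i)"
    by (simp add: sum_distrib_left)
  also have "\<dots> \<le> ennreal ((1 / G)^2) * ennreal (G * ?Sx * (norm (y - x))^2)"
    by (rule mult_left_mono[OF sum_W]) simp
  also have "\<dots> = ennreal (?Sx / G * (norm (y - x))^2)"
  proof -
    have "0 \<le> G * ?Sx * (norm (y - x))^2" using Gpos om bb by simp
    then have "ennreal ((1 / G)^2) * ennreal (G * ?Sx * (norm (y - x))^2) = ennreal ((1 / G)^2 * (G * ?Sx * (norm (y - x))^2))"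
      by (simp add: ennreal_mult)
    also have "(1 / G)^2 * (G * ?Sx * (norm (y - x))^2) = ?Sx / G * (norm (y - x))^2"
      using Gpos by (simp add: power2_eq_square field_simps)
    finally show ?thesis .
  qed
  also have "ennreal ((norm (g - gf x))^2) + ennreal (?Sx / G * (norm (y - x))^2)
      = ennreal ((norm (g - gf x))^2 + ?Sx / G * (norm (y - x))^2)"
    by (rule ennreal_plus[symmetric]) (use Gpos om bb in auto)
  finally show ?thesis by (simp add: mult_left_mono)
qed


lemma pairQ:
  assumes i: "i \<in> Gs" and l: "l \<in> Gs"
  shows "(\<integral>\<^sup>+v. ennreal ((norm (Q (Dh i y x (fst v i)) (snd v i) - Q (Dh l y x (fst v l)) (snd v l)))^2)
            \<partial>(PiM Gs ND \<Otimes>\<^sub>M PiM Gs (\<lambda>_. NQ)))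
     \<le> ennreal ((norm ((gfi i y - gfi i x) - (gfi l y - gfi l x)))^2) + Wt y x i + Wt y x l"
proof (cases "i = l")
  case True
  then show ?thesis by simp
next
  case False
  define a where "a j = (if j = i then 1 else if j = l then -1 else 0::real)" for j
  let ?X = "\<lambda>v j. Q (Dh j y x (fst v j)) (snd v j) - (gfi j y - gfi j x)"
  have sa: "\<And>v. (\<Sum>j\<in>Gs. a j *\<^sub>R ?X v j) = ?X v i - ?X v l"
  proof -
    fix v
    have "(\<Sum>j\<in>Gs. a j *\<^sub>R ?X v j) = (\<Sum>j\<in>Gs. (if j = i then ?X v j else 0) - (if j = l then ?X v j else 0))"
      by (rule sum.cong) (use False in \<open>auto simp: a_def\<close>)
    also have "\<dots> = ?X v i - ?X v l"
      using i l fin by (simp add: sum_subtractf)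
    finally show "(\<Sum>j\<in>Gs. a j *\<^sub>R ?X v j) = ?X v i - ?X v l" .
  qed
  have eq: "\<And>v. Q (Dh i y x (fst v i)) (snd v i) - Q (Dh l y x (fst v l)) (snd v l)
     = ((gfi i y - gfi i x) - (gfi l y - gfi l x)) + (\<Sum>j\<in>Gs. a j *\<^sub>R ?X v j)"
    unfolding sa by (simp add: algebra_simps)
  have sW: "(\<Sum>j\<in>Gs. ennreal ((a j)^2) * Wt y x j) = Wt y x i + Wt y x l"
  proof -
    have "(\<Sum>j\<in>Gs. ennreal ((a j)^2) * Wt y x j) = (\<Sum>j\<in>Gs. (if j = i then Wt y x j else 0) + (if j = l then Wt y x j else 0))"
      by (rule sum.cong) (use False in \<open>auto simp: a_def\<close>)
    also have "\<dots> = Wt y x i + Wt y x l"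
      using i l fin by (simp add: sum.distrib)
    finally show ?thesis .
  qed
  show ?thesis
    unfolding eq using inner_var_inst[of "(gfi i y - gfi i x) - (gfi l y - gfi l x)" a y x] sW
    by (simp add: add.assoc)
qed

lemma I2:
  assumes p: "0 \<le> p" "p \<le> 1"
  shows "(\<integral>\<^sup>+w. (\<Sum>i\<in>Gs. \<Sum>l\<in>Gs. ennreal ((norm (phi gfi Q Dh i y x g w - phi gfi Q Dh l y x g w))^2)) \<partial>Pw p)
     \<le> ennreal (p * (2 * G^2 * (B * (norm (gf y))^2 + \<zeta>^2)))
       + ennreal ((1 - p) * (2 * G^2 * ((1 + \<omega>) * Lpm^2 + (1 + \<omega>) * (LL^2 / bb) + \<omega> * L^2) * (norm (y - x))^2))"
proof -
  let ?Sx = "(1 + \<omega>) * (LL^2 / bb) + \<omega> * (L^2 + Lpm^2)"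
  let ?N = "PiM Gs ND \<Otimes>\<^sub>M PiM Gs (\<lambda>_. NQ)"
  let ?h = "\<lambda>w. (\<Sum>i\<in>Gs. \<Sum>l\<in>Gs. ennreal ((norm (phi gfi Q Dh i y x g w - phi gfi Q Dh l y x g w))^2))"
  interpret N: prob_space ?N by (rule prob_inner)
  have meas: "?h \<in> borel_measurable (Pw p)" by measurable
  have BZ: "0 \<le> B * (norm (gf y))^2 + \<zeta>^2"
    using A2[of y] Gpos by (smt (verit, ccfv_SIG) divide_nonneg_pos sum_nonneg zero_le_power2)
  have T: "\<And>v. ?h (True, v) \<le> ennreal (2 * G^2 * (B * (norm (gf y))^2 + \<zeta>^2))"
  proof -
    fix v
    have "?h (True, v) = ennreal (\<Sum>i\<in>Gs. \<Sum>l\<in>Gs. (norm (gfi i y - gfi l y))^2)"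
      by (simp add: phi_def sum_nonneg)
    also have "(\<Sum>i\<in>Gs. \<Sum>l\<in>Gs. (norm (gfi i y - gfi l y))^2) \<le> 2 * G * (\<Sum>i\<in>Gs. (norm (gfi i y - gf y))^2)"
      by (rule pair_sum_le[OF fin])
    also have "(\<Sum>i\<in>Gs. (norm (gfi i y - gf y))^2) \<le> G * (B * (norm (gf y))^2 + \<zeta>^2)"
      using A2[of y] Gpos by (simp add: field_simps)
    finally show "?h (True, v) \<le> ennreal (2 * G^2 * (B * (norm (gf y))^2 + \<zeta>^2))"
      using Gpos by (simp add: power2_eq_square mult.assoc mult_left_mono ennreal_leI)
  qed
  have Fsum: "(\<integral>\<^sup>+v. ?h (False, v) \<partial>?N)
      \<le> ennreal (2 * G^2 * ((1 + \<omega>) * Lpm^2 + (1 + \<omega>) * (LL^2 / bb) + \<omega> * L^2) * (norm (y - x))^2)"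
  proof -
    have "(\<integral>\<^sup>+v. ?h (False, v) \<partial>?N) = (\<Sum>i\<in>Gs. \<Sum>l\<in>Gs. \<integral>\<^sup>+v. ennreal ((norm (Q (Dh i y x (fst v i)) (snd v i) - Q (Dh l y x (fst v l)) (snd v l)))^2) \<partial>?N)"
    proof -
      have "(\<integral>\<^sup>+v. ?h (False, v) \<partial>?N) = (\<integral>\<^sup>+v. (\<Sum>i\<in>Gs. \<Sum>l\<in>Gs. ennreal ((norm (Q (Dh i y x (fst v i)) (snd v i) - Q (Dh l y x (fst v l)) (snd v l)))^2)) \<partial>?N)"
        by (simp add: phi_def)
      also have "\<dots> = (\<Sum>i\<in>Gs. \<integral>\<^sup>+v. (\<Sum>l\<in>Gs. ennreal ((norm (Q (Dh i y x (fst v i)) (snd v i) - Q (Dh l y x (fst v l)) (snd v l)))^2)) \<partial>?N)"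
        by (rule nn_integral_sum) measurable
      also have "\<dots> = (\<Sum>i\<in>Gs. \<Sum>l\<in>Gs. \<integral>\<^sup>+v. ennreal ((norm (Q (Dh i y x (fst v i)) (snd v i) - Q (Dh l y x (fst v l)) (snd v l)))^2) \<partial>?N)"
        by (intro sum.cong refl nn_integral_sum) measurable
      finally show ?thesis .
    qed
    also have "\<dots> \<le> (\<Sum>i\<in>Gs. \<Sum>l\<in>Gs. ennreal ((norm ((gfi i y - gfi i x) - (gfi l y - gfi l x)))^2) + Wt y x i + Wt y x l)"
      by (intro sum_mono pairQ)
    also have "\<dots> = ennreal (\<Sum>i\<in>Gs. \<Sum>l\<in>Gs. (norm ((gfi i y - gfi i x) - (gfi l y - gfi l x)))^2)
        + of_nat (card Gs) * (\<Sum>i\<in>Gs. Wt y x i) + of_nat (card Gs) * (\<Sum>l\<in>Gs. Wt y x l)"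
      by (simp add: sum.distrib sum_nonneg sum_distrib_left[symmetric] mult.commute)
    also have "\<dots> \<le> ennreal (2 * G * (G * (Lpm^2 * (norm (y - x))^2)))
        + of_nat (card Gs) * ennreal (G * ?Sx * (norm (y - x))^2) + of_nat (card Gs) * ennreal (G * ?Sx * (norm (y - x))^2)"
    proof (intro add_mono mult_left_mono sum_W order_refl ennreal_leI)
      have "(\<Sum>i\<in>Gs. \<Sum>l\<in>Gs. (norm ((gfi i y - gfi i x) - (gfi l y - gfi l x)))^2)
          \<le> 2 * G * (\<Sum>i\<in>Gs. (norm ((gfi i y - gfi i x) - (gf y - gf x)))^2)"
        by (rule pair_sum_le[OF fin])
      also have "(\<Sum>i\<in>Gs. (norm ((gfi i y - gfi i x) - (gf y - gf x)))^2)
          = (\<Sum>i\<in>Gs. (norm (gfi i y - gfi i x))^2) - G * (norm (gf y - gf x))^2"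
        by (rule mean_var[OF fin]) (simp add: sum_Delta)
      also have "\<dots> \<le> G * (Lpm^2 * (norm (y - x))^2)"
        using A3[of y x] Gpos by (simp add: field_simps)
      finally show "(\<Sum>i\<in>Gs. \<Sum>l\<in>Gs. (norm ((gfi i y - gfi i x) - (gfi l y - gfi l x)))^2)
          \<le> 2 * G * (G * (Lpm^2 * (norm (y - x))^2))"
        using Gpos by simp
    qed simp_all
    also have "\<dots> = ennreal (2 * G^2 * ((1 + \<omega>) * Lpm^2 + (1 + \<omega>) * (LL^2 / bb) + \<omega> * L^2) * (norm (y - x))^2)"
    proof -
      have n1: "0 \<le> G * ?Sx * (norm (y - x))^2" using Gpos om bb by simp
      have n0: "0 \<le> 2 * G * (G * (Lpm^2 * (norm (y - x))^2))" using Gpos by simp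
      have "of_nat (card Gs) * ennreal (G * ?Sx * (norm (y - x))^2) = ennreal (G * (G * ?Sx * (norm (y - x))^2))"
        using n1 Gpos by (simp add: ennreal_mult ennreal_of_nat_eq_real_of_nat)
      moreover have "ennreal (2 * G * (G * (Lpm^2 * (norm (y - x))^2))) + ennreal (G * (G * ?Sx * (norm (y - x))^2))
          + ennreal (G * (G * ?Sx * (norm (y - x))^2))
          = ennreal (2 * G * (G * (Lpm^2 * (norm (y - x))^2)) + G * (G * ?Sx * (norm (y - x))^2) + G * (G * ?Sx * (norm (y - x))^2))"
      proof -
        have n2: "0 \<le> G * (G * ?Sx * (norm (y - x))^2)" using n1 Gpos by simp
        show ?thesis
          by (simp only: ennreal_plus[symmetric, OF n0 n2] ennreal_plus[symmetric, OF add_nonneg_nonneg[OF n0 n2] n2])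
      qed
      moreover have "2 * G * (G * (Lpm^2 * (norm (y - x))^2)) + G * (G * ?Sx * (norm (y - x))^2) + G * (G * ?Sx * (norm (y - x))^2)
          = 2 * G^2 * ((1 + \<omega>) * Lpm^2 + (1 + \<omega>) * (LL^2 / bb) + \<omega> * L^2) * (norm (y - x))^2"
        by (simp add: power2_eq_square algebra_simps)
      ultimately show ?thesis by simp
    qed
    finally show ?thesis .
  qed
  have "(\<integral>\<^sup>+w. ?h w \<partial>Pw p) = ennreal p * (\<integral>\<^sup>+v. ?h (True, v) \<partial>?N) + ennreal (1 - p) * (\<integral>\<^sup>+v. ?h (False, v) \<partial>?N)"
    by (rule bern_split[OF p prob_inner meas])
  also have "\<dots> \<le> ennreal p * (\<integral>\<^sup>+v. ennreal (2 * G^2 * (B * (norm (gf y))^2 + \<zeta>^2)) \<partial>?N)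
      + ennreal (1 - p) * ennreal (2 * G^2 * ((1 + \<omega>) * Lpm^2 + (1 + \<omega>) * (LL^2 / bb) + \<omega> * L^2) * (norm (y - x))^2)"
    by (intro add_mono mult_left_mono nn_integral_mono T Fsum) simp_all
  also have "\<dots> = ennreal (p * (2 * G^2 * (B * (norm (gf y))^2 + \<zeta>^2)))
       + ennreal ((1 - p) * (2 * G^2 * ((1 + \<omega>) * Lpm^2 + (1 + \<omega>) * (LL^2 / bb) + \<omega> * L^2) * (norm (y - x))^2))"
    using p BZ Gpos om bb by (simp add: N.emeasure_space_1 ennreal_mult)
  finally show ?thesis .
qed


lemma phi_meas_gen:
  assumes i: "i \<in> Gs" and Y: "Y \<in> borel_measurable N" and X: "X \<in> borel_measurable N"
    and Gg: "Gg \<in> borel_measurable N" and Ww: "Ww \<in> N \<rightarrow>\<^sub>M Pw p"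
  shows "(\<lambda>z. phi gfi Q Dh i (Y z) (X z) (Gg z) (Ww z)) \<in> borel_measurable N"
proof -
  note [measurable] = Y X Gg Ww gfim[OF i] Dmj[OF i]
  have c: "(\<lambda>z. fst (snd (Ww z)) i) \<in> N \<rightarrow>\<^sub>M ND i" using i by measurable
  have d: "(\<lambda>z. snd (snd (Ww z)) i) \<in> N \<rightarrow>\<^sub>M NQ" using i by measurable
  note [measurable] = c d
  have e: "(\<lambda>z. Dh i (Y z) (X z) (fst (snd (Ww z)) i)) \<in> borel_measurable N"
  proof -
    have "(\<lambda>z. (Y z, X z, fst (snd (Ww z)) i)) \<in> N \<rightarrow>\<^sub>M borel \<Otimes>\<^sub>M borel \<Otimes>\<^sub>M ND i" by measurable
    from measurable_compose[OF this Dmj[OF i]] show ?thesis by simp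
  qed
  have f: "(\<lambda>z. Q (Dh i (Y z) (X z) (fst (snd (Ww z)) i)) (snd (snd (Ww z)) i)) \<in> borel_measurable N"
  proof -
    have "(\<lambda>z. (Dh i (Y z) (X z) (fst (snd (Ww z)) i), snd (snd (Ww z)) i)) \<in> N \<rightarrow>\<^sub>M borel \<Otimes>\<^sub>M NQ"
      using e d by (rule measurable_Pair)
    from measurable_compose[OF this Qm] show ?thesis by simp
  qed
  have cc: "(\<lambda>z. fst (Ww z)) \<in> N \<rightarrow>\<^sub>M measure_pmf (bernoulli_pmf p)" by measurable
  have S: "{z \<in> space N. fst (Ww z)} \<in> sets N"
  proof -
    have "(\<lambda>z. fst (Ww z)) -` {True} \<inter> space N \<in> sets N"
      by (rule measurable_sets[OF cc]) simp
    moreover have "(\<lambda>z. fst (Ww z)) -` {True} \<inter> space N = {z \<in> space N. fst (Ww z)}" by auto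
    ultimately show ?thesis by simp
  qed
  have g1: "(\<lambda>z. gfi i (Y z)) \<in> borel_measurable N" by measurable
  have g2: "(\<lambda>z. Gg z + Q (Dh i (Y z) (X z) (fst (snd (Ww z)) i)) (snd (snd (Ww z)) i)) \<in> borel_measurable N"
    using Gg f by (rule borel_measurable_add)
  show ?thesis unfolding phi_def by (rule measurable_If[OF g1 g2 S])
qed

end


lemma loc_deriv:
  fixes fij :: "nat \<Rightarrow> nat \<Rightarrow> 'a::euclidean_space \<Rightarrow> real"
  assumes "\<And>j y. j < m \<Longrightarrow> GDERIV (fij i j) y :> dfij i j y"
  shows "GDERIV (loc_f m fij i) y :> loc_grad m dfij i y"
proof -
  have "((\<lambda>y. \<Sum>j<m. fij i j y) has_derivative (\<lambda>h. \<Sum>j<m. h \<bullet> dfij i j y)) (at y)"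
    by (rule has_derivative_sum) (use assms in \<open>auto simp: gderiv_def\<close>)
  then have "((\<lambda>y. (1 / real m) * (\<Sum>j<m. fij i j y)) has_derivative (\<lambda>h. (1 / real m) * (\<Sum>j<m. h \<bullet> dfij i j y))) (at y)"
    by (rule has_derivative_mult_right)
  moreover have "(\<lambda>y. (1 / real m) * (\<Sum>j<m. fij i j y)) = loc_f m fij i"
    by (auto simp: loc_f_def fun_eq_iff)
  moreover have "(\<lambda>h. (1 / real m) * (\<Sum>j<m. h \<bullet> dfij i j y)) = (\<lambda>h. h \<bullet> loc_grad m dfij i y)"
    by (auto simp: loc_grad_def fun_eq_iff inner_sum_right)
  ultimately show ?thesis unfolding gderiv_def by simp
qed

lemma glob_deriv:
  fixes fij :: "nat \<Rightarrow> nat \<Rightarrow> 'a::euclidean_space \<Rightarrow> real"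
  assumes "\<And>i j y. i \<in> Gs \<Longrightarrow> j < m \<Longrightarrow> GDERIV (fij i j) y :> dfij i j y"
  shows "GDERIV (glob_f Gs m fij) y :> glob_grad Gs m dfij y"
proof -
  have "((\<lambda>y. \<Sum>i\<in>Gs. loc_f m fij i y) has_derivative (\<lambda>h. \<Sum>i\<in>Gs. h \<bullet> loc_grad m dfij i y)) (at y)"
  proof (rule has_derivative_sum)
    fix i assume i: "i \<in> Gs"
    have "GDERIV (loc_f m fij i) y :> loc_grad m dfij i y"
      by (rule loc_deriv) (rule assms[OF i])
    then show "((\<lambda>y. loc_f m fij i y) has_derivative (\<lambda>h. h \<bullet> loc_grad m dfij i y)) (at y)"
      by (simp add: gderiv_def)
  qed
  then have "((\<lambda>y. (1 / real (card Gs)) * (\<Sum>i\<in>Gs. loc_f m fij i y)) has_derivative (\<lambda>h. (1 / real (card Gs)) * (\<Sum>i\<in>Gs. h \<bullet> loc_grad m dfij i y))) (at y)"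
    by (rule has_derivative_mult_right)
  moreover have "(\<lambda>y. (1 / real (card Gs)) * (\<Sum>i\<in>Gs. loc_f m fij i y)) = glob_f Gs m fij"
    by (auto simp: glob_f_def fun_eq_iff)
  moreover have "(\<lambda>h. (1 / real (card Gs)) * (\<Sum>i\<in>Gs. h \<bullet> loc_grad m dfij i y)) = (\<lambda>h. h \<bullet> glob_grad Gs m dfij y)"
    by (auto simp: glob_grad_def fun_eq_iff inner_sum_right)
  ultimately show ?thesis unfolding gderiv_def by simp
qed


lemma lyap_step:
  fixes a a' e e' d r d' \<gamma> p L A c \<delta> B \<zeta> T S2 K0 G :: real
  assumes D1: "a' + \<gamma>/2*d + \<gamma>/2*(1 - L*\<gamma>)*r \<le> a + \<gamma>/2*e"
    and V1: "e' \<le> (1+p/2)*(1-p)*(e + T*\<gamma>^2*r) + (1+2/p)*K0*(p*(2*G^2*(B*d' + \<zeta>^2)) + (1-p)*(2*G^2*S2*\<gamma>^2*r))"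
    and D2: "d' \<le> 2*d + 2*L^2*\<gamma>^2*r"
    and nn: "e \<ge> 0" "d \<ge> 0" "r \<ge> 0" "d' \<ge> 0"
    and K: "K0*(2*G^2) \<le> 4*c*\<delta>" "K0 \<ge> 0"
    and par: "0 < p" "p \<le> 1" "\<gamma> > 0" "B \<ge> 0" "c * \<delta> \<ge> 0" "T \<ge> 0" "S2 \<ge> 0"
    and Ab: "3*(1-p)*T/p + 24*c*\<delta>*(1-p)*S2/p^2 + 48*B*L^2*c*\<delta>/p \<le> A"
    and step: "\<gamma>^2 * A \<le> 1 - L*\<gamma>"
  shows "a' + \<gamma>/p*e' + \<gamma>/2*(1 - 48*c*\<delta>*B/p)*d \<le> a + \<gamma>/p*e + 12*\<gamma>*c*\<delta>*\<zeta>^2/p"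
proof -
  have cd': "0 \<le> \<delta> * c" using par by (simp add: mult.commute)
  define K2 where "K2 = K0*(2*G^2)"
  define c1 where "c1 = (1+p/2)*(1-p)"
  define X where "X = c1*T + (1+2/p)*(1-p)*K2*S2 + 24*c*\<delta>*B*L^2"
  have K2: "K2 \<le> 4*c*\<delta>" "K2 \<ge> 0" using K by (auto simp: K2_def)
  have c1e: "c1 = 1 - p/2 - p^2/2" by (simp add: c1_def field_simps power2_eq_square)
  have c1: "0 \<le> c1" "c1 \<le> 1 - p/2"
  proof -
    show "0 \<le> c1" using par unfolding c1_def by (intro mult_nonneg_nonneg) auto
    show "c1 \<le> 1 - p/2" unfolding c1e by simp
  qed
  have V1': "e' \<le> c1*e + c1*T*\<gamma>^2*r + (1+2/p)*(1-p)*K2*S2*\<gamma>^2*r + (p+2)*K2*(B*d' + \<zeta>^2)"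
  proof -
    have "(1+2/p)*K0*(p*(2*G^2*(B*d' + \<zeta>^2))) = (p+2)*K2*(B*d' + \<zeta>^2)"
      using par by (simp add: K2_def field_simps)
    moreover have "(1+2/p)*K0*((1-p)*(2*G^2*S2*\<gamma>^2*r)) = (1+2/p)*(1-p)*K2*S2*\<gamma>^2*r"
      unfolding K2_def by (simp only: mult.assoc mult.commute mult.left_commute)
    ultimately show ?thesis using V1 unfolding c1_def by (simp add: algebra_simps)
  qed
  have E1: "(p+2)*K2*(B*d' + \<zeta>^2) \<le> 12*c*\<delta>*(B*(2*d + 2*L^2*\<gamma>^2*r)) + 12*c*\<delta>*\<zeta>^2"
  proof -
    have "(p+2)*K2 \<le> 12*c*\<delta>"
    proof -
      have "(p+2)*K2 \<le> 3*K2" using par K2 by (intro mult_right_mono) auto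
      then show ?thesis using K2 by linarith
    qed
    moreover have "0 \<le> B*d' + \<zeta>^2" using par nn by simp
    ultimately have "(p+2)*K2*(B*d' + \<zeta>^2) \<le> 12*c*\<delta>*(B*d' + \<zeta>^2)" by (rule mult_right_mono)
    also have "\<dots> \<le> 12*c*\<delta>*(B*(2*d + 2*L^2*\<gamma>^2*r) + \<zeta>^2)"
      using par D2 cd' by (intro mult_left_mono add_right_mono) auto
    finally show ?thesis by (simp add: algebra_simps)
  qed
  have e'b: "e' \<le> c1*e + \<gamma>^2*r*X + 24*c*\<delta>*B*d + 12*c*\<delta>*\<zeta>^2"
  proof -
    define q where "q = (1+2/p)*(1-p)"
    have "c1*e + \<gamma>^2*r*X + 24*c*\<delta>*B*d + 12*c*\<delta>*\<zeta>^2
        = c1*e + c1*T*\<gamma>^2*r + q*K2*S2*\<gamma>^2*r + (12*c*\<delta>*(B*(2*d + 2*L^2*\<gamma>^2*r)) + 12*c*\<delta>*\<zeta>^2)"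
      unfolding X_def q_def[symmetric] by (simp add: algebra_simps)
    moreover have "(1+2/p)*(1-p)*K2*S2*\<gamma>^2*r = q*K2*S2*\<gamma>^2*r" by (simp add: q_def)
    ultimately show ?thesis using V1' E1 by linarith
  qed
  have X: "2*X/p \<le> A"
  proof -
    have a1: "2*(c1*T)/p \<le> 3*(1-p)*T/p"
    proof -
      have "2*c1 = (2+p)*(1-p)" by (simp add: c1_def field_simps)
      also have "\<dots> \<le> 3*(1-p)" using par by (intro mult_right_mono) auto
      finally have "2*c1 \<le> 3*(1-p)" .
      then have "2*c1*T \<le> 3*(1-p)*T" using par by (intro mult_right_mono) auto
      then show ?thesis using par by (simp add: divide_right_mono)
    qed
    have a2: "2*((1+2/p)*(1-p)*K2*S2)/p \<le> 24*c*\<delta>*(1-p)*S2/p^2"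
    proof -
      have "2*((1+2/p)*(1-p)*K2*S2)/p = 2*(p+2)*K2*((1-p)*S2)/p^2"
        using par by (simp add: field_simps power2_eq_square)
      also have "\<dots> \<le> 24*c*\<delta>*((1-p)*S2)/p^2"
      proof -
        have "2*(p+2)*K2 \<le> 24*c*\<delta>"
        proof -
          have "2*(p+2)*K2 \<le> 6*K2" using par K2 by (intro mult_right_mono) auto
          then show ?thesis using K2 by linarith
        qed
        then have "2*(p+2)*K2*((1-p)*S2) \<le> 24*c*\<delta>*((1-p)*S2)" using par by (intro mult_right_mono) auto
        then show ?thesis using par by (simp add: divide_right_mono)
      qed
      finally show ?thesis by (simp add: algebra_simps)
    qed
    have a3: "2*(24*c*\<delta>*B*L^2)/p = 48*B*L^2*c*\<delta>/p" by (simp add: algebra_simps)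
    have "2*X/p = 2*(c1*T)/p + 2*((1+2/p)*(1-p)*K2*S2)/p + 2*(24*c*\<delta>*B*L^2)/p"
      unfolding X_def by (simp add: add_divide_distrib distrib_left)
    then show ?thesis using a1 a2 a3 Ab by linarith
  qed
  have t3: "0 \<le> 24*c*\<delta>*B*L^2"
  proof -
    have "24*c*\<delta>*B*L^2 = 24*(c*\<delta>)*(B*L^2)" by (simp add: mult_ac)
    moreover have "0 \<le> 24*(c*\<delta>)*(B*L^2)"
      by (rule mult_nonneg_nonneg[OF mult_nonneg_nonneg[OF _ par(5)] mult_nonneg_nonneg[OF par(4) zero_le_power2]]) simp
    ultimately show ?thesis by simp
  qed
  have t2: "0 \<le> (1+2/p)*(1-p)*K2*S2" using par K2 by (intro mult_nonneg_nonneg) auto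
  have Xn: "X \<ge> 0" unfolding X_def
    by (rule add_nonneg_nonneg[OF add_nonneg_nonneg[OF mult_nonneg_nonneg[OF c1(1) par(6)] t2] t3])
  have G2: "\<gamma>/p*(\<gamma>^2*r*X) \<le> \<gamma>/2*(1 - L*\<gamma>)*r"
  proof -
    have "\<gamma>^2*(2*X/p) \<le> \<gamma>^2*A" using X par by (intro mult_left_mono) auto
    then have "\<gamma>^2*(2*X/p) \<le> 1 - L*\<gamma>" using step by linarith
    then have ineq: "\<gamma>/2*(\<gamma>^2*(2*X/p))*r \<le> \<gamma>/2*(1 - L*\<gamma>)*r"
      using par nn by (intro mult_right_mono mult_left_mono) auto
    have eq: "\<gamma>/p*(\<gamma>^2*r*X) = \<gamma>/2*(\<gamma>^2*(2*X/p))*r" using par by (simp add: field_simps)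
    show ?thesis unfolding eq by (rule ineq)
  qed
  have G1: "\<gamma>/p*(c1*e) \<le> \<gamma>/p*e - \<gamma>/2*e"
  proof -
    have "\<gamma>/p*(c1*e) \<le> \<gamma>/p*((1 - p/2)*e)" using c1 par nn by (intro mult_left_mono mult_right_mono) auto
    also have "\<gamma>/p*((1 - p/2)*e) = \<gamma>/p*e - \<gamma>/2*e" using par by (simp add: field_simps)
    finally show ?thesis .
  qed
  have Ge: "\<gamma>/p*e' \<le> \<gamma>/p*(c1*e) + \<gamma>/p*(\<gamma>^2*r*X) + \<gamma>/p*(24*c*\<delta>*B*d) + \<gamma>/p*(12*c*\<delta>*\<zeta>^2)"
  proof -
    have "\<gamma>/p*e' \<le> \<gamma>/p*(c1*e + \<gamma>^2*r*X + 24*c*\<delta>*B*d + 12*c*\<delta>*\<zeta>^2)"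
      using e'b par by (intro mult_left_mono) auto
    then show ?thesis by (simp add: distrib_left)
  qed
  have eqd: "\<gamma>/2*(1 - 48*c*\<delta>*B/p)*d = \<gamma>/2*d - \<gamma>/p*(24*c*\<delta>*B*d)" using par by (simp add: field_simps)
  have eqz: "12*\<gamma>*c*\<delta>*\<zeta>^2/p = \<gamma>/p*(12*c*\<delta>*\<zeta>^2)" by simp
  have eqr: "\<gamma>/2*(1 - L*\<gamma>)*r = \<gamma>/2*(1 - L*\<gamma>)*r" ..
  show ?thesis unfolding eqd eqz using D1 G1 G2 Ge by linarith
qed


lemma stepsize_bound:
  fixes \<gamma> L A :: real
  assumes g: "0 < \<gamma>" "\<gamma> \<le> 1 / (L + sqrt A)" and A: "A \<ge> 0" and L: "L \<ge> 0"
  shows "\<gamma>^2 * A \<le> 1 - L * \<gamma>"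
proof -
  have spos: "L + sqrt A > 0"
  proof (rule ccontr)
    assume "\<not> L + sqrt A > 0"
    then have "L + sqrt A = 0" using L A by (smt (verit) real_sqrt_ge_zero)
    then show False using g by simp
  qed
  have "\<gamma> * (L + sqrt A) \<le> 1" using g spos by (simp add: le_divide_eq)
  then have s1: "sqrt A * \<gamma> \<le> 1 - L * \<gamma>" by (simp add: algebra_simps)
  have s0: "0 \<le> sqrt A * \<gamma>" using A g by simp
  have "sqrt A * \<gamma> \<le> 1" using s1 L g by (smt (verit) mult_nonneg_nonneg)
  then have "(sqrt A * \<gamma>) * (sqrt A * \<gamma>) \<le> 1 * (sqrt A * \<gamma>)" using s0 by (intro mult_right_mono) auto
  moreover have "(sqrt A * \<gamma>) * (sqrt A * \<gamma>) = \<gamma>^2 * A" using A by (simp add: power2_eq_square algebra_simps)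
  ultimately show ?thesis using s1 by simp
qed

lemma telescope:
  fixes \<Phi> d :: "nat \<Rightarrow> real"
  assumes step: "\<And>k. \<Phi> (Suc k) + \<alpha> * d k \<le> \<Phi> k + \<beta>"
  shows "\<Phi> n + \<alpha> * (\<Sum>k<n. d k) \<le> \<Phi> 0 + real n * \<beta>"
proof (induction n)
  case 0 then show ?case by simp
next
  case (Suc n)
  have "\<Phi> (Suc n) + \<alpha> * (\<Sum>k<Suc n. d k) = (\<Phi> (Suc n) + \<alpha> * d n) + \<alpha> * (\<Sum>k<n. d k)"
    by (simp add: algebra_simps)
  also have "\<dots> \<le> \<Phi> n + \<beta> + \<alpha> * (\<Sum>k<n. d k)" using step[of n] by simp
  also have "\<dots> \<le> \<Phi> 0 + real n * \<beta> + \<beta>" using Suc.IH by simp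
  finally show ?case by (simp add: algebra_simps)
qed

lemma final_avg:
  fixes \<Phi> d :: "nat \<Rightarrow> real"
  assumes step: "\<And>k. \<Phi> (Suc k) + \<alpha> * d k \<le> \<Phi> k + \<beta>" and nn: "\<And>k. \<Phi> k \<ge> 0"
    and a: "\<alpha> > 0"
  shows "(\<Sum>k<Suc K. d k) / real (Suc K) \<le> \<Phi> 0 / (\<alpha> * real (Suc K)) + \<beta> / \<alpha>"
proof -
  have "\<alpha> * (\<Sum>k<Suc K. d k) \<le> \<Phi> 0 + real (Suc K) * \<beta>"
    using telescope[of \<Phi> \<alpha> d \<beta> "Suc K", OF step] nn[of "Suc K"] by linarith
  then have "(\<Sum>k<Suc K. d k) \<le> (\<Phi> 0 + real (Suc K) * \<beta>) / \<alpha>" using a by (simp add: field_simps)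
  then have "(\<Sum>k<Suc K. d k) / real (Suc K) \<le> (\<Phi> 0 + real (Suc K) * \<beta>) / \<alpha> / real (Suc K)"
    by (intro divide_right_mono) auto
  also have "\<dots> = \<Phi> 0 / (\<alpha> * real (Suc K)) + \<beta> / \<alpha>"
  proof -
    have n: "real (Suc K) \<noteq> 0" by simp
    have "(\<Phi> 0 + real (Suc K) * \<beta>) / \<alpha> / real (Suc K) = (\<Phi> 0 + real (Suc K) * \<beta>) / (\<alpha> * real (Suc K))"
      by (simp add: divide_divide_eq_left)
    also have "\<dots> = \<Phi> 0 / (\<alpha> * real (Suc K)) + (real (Suc K) * \<beta>) / (\<alpha> * real (Suc K))"
      by (rule add_divide_distrib)
    also have "(real (Suc K) * \<beta>) / (\<alpha> * real (Suc K)) = \<beta> / \<alpha>"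
      using n by (simp del: of_nat_Suc)
    finally show ?thesis .
  qed
  finally show ?thesis .
qed


theorem theorem1:
  fixes M :: "'w measure" and F :: "nat \<Rightarrow> 'w measure"
    and n m :: nat and Gs :: "nat set" and \<delta> :: real
    and fij :: "nat \<Rightarrow> nat \<Rightarrow> 'a::euclidean_space \<Rightarrow> real"
    and dfij :: "nat \<Rightarrow> nat \<Rightarrow> 'a \<Rightarrow> 'a"
    and L B \<zeta> Lpm LL c \<omega> \<gamma> p :: real and b :: nat
    and ND :: "nat \<Rightarrow> 'e measure"
    and Dh :: "nat \<Rightarrow> 'a \<Rightarrow> 'a \<Rightarrow> 'e \<Rightarrow> 'a"
    and NQ :: "'r measure" and Q :: "'a \<Rightarrow> 'r \<Rightarrow> 'a"
    and x0 :: 'a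
    and x g :: "nat \<Rightarrow> 'w \<Rightarrow> 'a"
    and gw :: "nat \<Rightarrow> nat \<Rightarrow> 'w \<Rightarrow> 'a"
    and cc :: "nat \<Rightarrow> 'w \<Rightarrow> bool"
    and \<xi> :: "nat \<Rightarrow> nat \<Rightarrow> 'w \<Rightarrow> 'e"
    and \<eta> :: "nat \<Rightarrow> nat \<Rightarrow> 'w \<Rightarrow> 'r"
    and K :: nat
  defines "G \<equiv> real (card Gs)"
    and "f \<equiv> glob_f Gs m fij"
    and "gradf \<equiv> glob_grad Gs m dfij"
    and "gradfi \<equiv> loc_grad m dfij"
    and "fstar \<equiv> (INF y. glob_f Gs m fij y)"
  assumes \<comment> \<open>workers: good set Gs, Byzantine set {..<n} - Gs\<close>
    workers: "Gs \<subseteq> {..<n}" "card Gs \<ge> 2"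
    and byz: "real (card ({..<n} - Gs)) \<le> \<delta> * real n" "0 \<le> \<delta>" "\<delta> < 1/2"
    and finite_sum: "m \<ge> 1"
    and grads: "\<And>i j y. i \<in> Gs \<Longrightarrow> j < m \<Longrightarrow> GDERIV (fij i j) y :> dfij i j y"
    \<comment> \<open>(A1)\<close>
    and A1: "\<And>y z. norm (gradf y - gradf z) \<le> L * norm (y - z)" "bdd_below (range f)"
    \<comment> \<open>(A2)\<close>
    and A2: "B \<ge> 0" "\<And>y. (\<Sum>i\<in>Gs. (norm (gradfi i y - gradf y))^2) / G \<le> B * (norm (gradf y))^2 + \<zeta>^2"
    \<comment> \<open>(A3)\<close>
    and A3: "Lpm \<ge> 0" "\<And>y z. (\<Sum>i\<in>Gs. (norm (gradfi i y - gradfi i z))^2) / G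
                 - (norm (gradf y - gradf z))^2 \<le> Lpm^2 * (norm (y - z))^2"
    \<comment> \<open>(A4): the estimator of worker i at (y,z) is Dh i y z e, with e drawn from ND i\<close>
    and A4: "b \<ge> 1" "LL \<ge> 0"
      "\<And>i. i \<in> Gs \<Longrightarrow> prob_space (ND i)"
      "\<And>i. i \<in> Gs \<Longrightarrow> (\<lambda>(y, z, e). Dh i y z e) \<in> borel \<Otimes>\<^sub>M borel \<Otimes>\<^sub>M ND i \<rightarrow>\<^sub>M borel"
      "\<And>i y z. i \<in> Gs \<Longrightarrow> integrable (ND i) (Dh i y z)"
      "\<And>i y z. i \<in> Gs \<Longrightarrow> (\<integral>e. Dh i y z e \<partial>ND i) = gradfi i y - gradfi i z"
      "\<And>y z. (\<Sum>i\<in>Gs. \<integral>\<^sup>+ e. ennreal ((norm (Dh i y z e - (gradfi i y - gradfi i z)))^2) \<partial>ND i) / ennreal G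
               \<le> ennreal (LL^2 / real b * (norm (y - z))^2)"
    \<comment> \<open>compressor: Q y r with r drawn from NQ\<close>
    and compressor: "prob_space NQ" "\<omega> \<ge> 0"
      "(\<lambda>(y, r). Q y r) \<in> borel \<Otimes>\<^sub>M NQ \<rightarrow>\<^sub>M borel"
      "\<And>y. integrable NQ (Q y)"
      "\<And>y. (\<integral>r. Q y r \<partial>NQ) = y"
      "\<And>y. (\<integral>\<^sup>+ r. ennreal ((norm (Q y r - y))^2) \<partial>NQ) \<le> ennreal (\<omega> * (norm y)^2)"
    \<comment> \<open>probability space and filtration of the run\<close>
    and space: "prob_space M"
      "\<And>k. subalgebra M (F k)" "\<And>k. subalgebra (F (Suc k)) (F k)"
    \<comment> \<open>Byz-VR-MARINA\<close>
    and params: "0 < p" "p \<le> 1" "0 < \<gamma>" "c > 0"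
    and init: "\<And>\<omega>'. x 0 \<omega>' = x0" "\<And>k. g k \<in> borel_measurable (F k)"
    and step_x: "\<And>k \<omega>'. x (Suc k) \<omega>' = x k \<omega>' - \<gamma> *\<^sub>R g k \<omega>'"
    and fresh: "\<And>k. (\<lambda>\<omega>'. (cc k \<omega>', restrict (\<lambda>i. \<xi> k i \<omega>') Gs, restrict (\<lambda>i. \<eta> k i \<omega>') Gs))
         \<in> F (Suc k) \<rightarrow>\<^sub>M measure_pmf (bernoulli_pmf p) \<Otimes>\<^sub>M (PiM Gs ND \<Otimes>\<^sub>M PiM Gs (\<lambda>_. NQ))"
      "\<And>k A S. A \<in> sets (F k) \<Longrightarrow>
         S \<in> sets (measure_pmf (bernoulli_pmf p) \<Otimes>\<^sub>M (PiM Gs ND \<Otimes>\<^sub>M PiM Gs (\<lambda>_. NQ))) \<Longrightarrow>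
         measure M (A \<inter> {\<omega>' \<in> space M. (cc k \<omega>', restrict (\<lambda>i. \<xi> k i \<omega>') Gs, restrict (\<lambda>i. \<eta> k i \<omega>') Gs) \<in> S})
         = measure M A * measure (measure_pmf (bernoulli_pmf p) \<Otimes>\<^sub>M (PiM Gs ND \<Otimes>\<^sub>M PiM Gs (\<lambda>_. NQ))) S"
    and good_update: "\<And>k i \<omega>'. i \<in> Gs \<Longrightarrow> gw (Suc k) i \<omega>' =
         (if cc k \<omega>' then gradfi i (x (Suc k) \<omega>')
          else g k \<omega>' + Q (Dh i (x (Suc k) \<omega>') (x k \<omega>') (\<xi> k i \<omega>')) (\<eta> k i \<omega>'))"
    \<comment> \<open>robustness (R) of the aggregator output g (Suc k)\<close>
    and R: "\<And>k. (\<integral>\<^sup>+ \<omega>'. ennreal ((norm (g (Suc k) \<omega>' - (1 / G) *\<^sub>R (\<Sum>i\<in>Gs. gw (Suc k) i \<omega>')))^2) \<partial>M)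
         \<le> ennreal (c * \<delta> / (G * (G - 1)))
           * (\<Sum>i\<in>Gs. \<Sum>l\<in>Gs. \<integral>\<^sup>+ \<omega>'. ennreal ((norm (gw (Suc k) i \<omega>' - gw (Suc k) l \<omega>'))^2) \<partial>M)"
    and stepsize: "\<gamma> \<le> 1 / (L + sqrt (constA B L c \<delta> p G \<omega> LL (real b) Lpm))"
    and het: "48 * c * B * \<delta> < p"
  shows "(\<integral>\<^sup>+ k. (\<integral>\<^sup>+ \<omega>'. ennreal ((norm (gradf (x k \<omega>')))^2) \<partial>M) \<partial>measure_pmf (pmf_of_set {0..K}))
     \<le> ennreal (2 / (\<gamma> * (1 - 48 * B * c * \<delta> / p) * real (K + 1)))
         * (\<integral>\<^sup>+ \<omega>'. ennreal (f x0 - fstar + \<gamma> / p * (norm (g 0 \<omega>' - gradf x0))^2) \<partial>M)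
       + ennreal (24 * c * \<delta> * \<zeta>^2 / (p - 48 * B * c * \<delta>))"
  proof -
  have finGs: "finite Gs" using workers(1) by (rule finite_subset) simp
  have Gpos: "G > 0" and G2: "G \<ge> 2" unfolding G_def using workers(2) by auto
  have gf_deriv: "\<And>y. GDERIV f y :> gradf y" unfolding f_def gradf_def by (rule glob_deriv) (rule grads)
  have gfi_deriv: "\<And>i y. i \<in> Gs \<Longrightarrow> GDERIV (loc_f m fij i) y :> gradfi i y"
    unfolding gradfi_def by (rule loc_deriv) (rule grads)
  have gf_eq: "\<And>y. gradf y = (1 / real (card Gs)) *\<^sub>R (\<Sum>i\<in>Gs. gradfi i y)"
    by (simp add: gradf_def glob_grad_def gradfi_def)
  have fm[measurable]: "f \<in> borel_measurable borel"
    by (rule borel_measurable_continuous_onI[OF gderiv_cont[OF gf_deriv]])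
  have gfm[measurable]: "gradf \<in> borel_measurable borel" by (rule gderiv_measurable[OF gf_deriv])
  have gfim: "\<And>i. i \<in> Gs \<Longrightarrow> gradfi i \<in> borel_measurable borel"
    by (rule gderiv_measurable[OF gfi_deriv])
  have Lnn: "L \<ge> 0"
  proof -
    obtain e :: 'a where e: "e \<in> Basis" using nonempty_Basis by blast
    have "norm (gradf e - gradf 0) \<le> L * norm (e - 0)" by (rule A1(1))
    then show ?thesis using e by (smt (verit) norm_Basis norm_ge_zero diff_zero mult_cancel_left1)
  qed
  interpret I: marina_inner Gs gradfi gradf Dh ND Q NQ L Lpm LL "real b" \<omega> B \<zeta>
  proof (rule marina_inner.intro)
    show "finite Gs" by (rule finGs)
    show "card Gs \<ge> 2" by (rule workers(2))
    show "\<And>y. gradf y = (1 / real (card Gs)) *\<^sub>R (\<Sum>i\<in>Gs. gradfi i y)" by (rule gf_eq)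
    show "\<And>i. i \<in> Gs \<Longrightarrow> gradfi i \<in> borel_measurable borel" by (rule gfim)
    show "\<And>y z. norm (gradf y - gradf z) \<le> L * norm (y - z)" by (rule A1(1))
    show "\<And>y. (\<Sum>i\<in>Gs. (norm (gradfi i y - gradf y))^2) / real (card Gs) \<le> B * (norm (gradf y))^2 + \<zeta>^2"
      using A2(2) unfolding G_def .
    show "\<And>y z. (\<Sum>i\<in>Gs. (norm (gradfi i y - gradfi i z))^2) / real (card Gs)
                 - (norm (gradf y - gradf z))^2 \<le> Lpm^2 * (norm (y - z))^2"
      using A3(2) unfolding G_def .
    show "\<And>i. i \<in> Gs \<Longrightarrow> prob_space (ND i)" by (rule A4(3))
    show "\<And>i. i \<in> Gs \<Longrightarrow> (\<lambda>(y, z, e). Dh i y z e) \<in> borel \<Otimes>\<^sub>M borel \<Otimes>\<^sub>M ND i \<rightarrow>\<^sub>M borel" by (rule A4(4))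
    show "\<And>i y z. i \<in> Gs \<Longrightarrow> integrable (ND i) (Dh i y z)" by (rule A4(5))
    show "\<And>i y z. i \<in> Gs \<Longrightarrow> (\<integral>e. Dh i y z e \<partial>ND i) = gradfi i y - gradfi i z" by (rule A4(6))
    show "\<And>y z. (\<Sum>i\<in>Gs. \<integral>\<^sup>+ e. ennreal ((norm (Dh i y z e - (gradfi i y - gradfi i z)))^2) \<partial>ND i) / ennreal (real (card Gs))
               \<le> ennreal (LL^2 / real b * (norm (y - z))^2)"
      using A4(7) unfolding G_def .
    show "real b > 0" using A4(1) by simp
    show "prob_space NQ" by (rule compressor(1))
    show "\<omega> \<ge> 0" by (rule compressor(2))
    show "(\<lambda>(y, r). Q y r) \<in> borel \<Otimes>\<^sub>M NQ \<rightarrow>\<^sub>M borel" by (rule compressor(3))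
    show "\<And>y. integrable NQ (Q y)" by (rule compressor(4))
    show "\<And>y. (\<integral>r. Q y r \<partial>NQ) = y" by (rule compressor(5))
    show "\<And>y. (\<integral>\<^sup>+ r. ennreal ((norm (Q y r - y))^2) \<partial>NQ) \<le> ennreal (\<omega> * (norm y)^2)" by (rule compressor(6))
  qed
  interpret MP: prob_space M by (rule space(1))
  have xF: "\<And>k. x k \<in> borel_measurable (F k)"
  proof -
    fix k show "x k \<in> borel_measurable (F k)"
    proof (induction k)
      case 0
      have "x 0 = (\<lambda>_. x0)" by (rule ext) (rule init(1))
      then show ?case by simp
    next
      case (Suc k)
      have "(\<lambda>s. x k s - \<gamma> *\<^sub>R g k s) \<in> borel_measurable (F k)"
        using Suc init(2)[of k] by measurable
      then have "(\<lambda>s. x k s - \<gamma> *\<^sub>R g k s) \<in> borel_measurable (F (Suc k))"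
        by (rule measurable_from_subalg[OF space(3)])
      moreover have "x (Suc k) = (\<lambda>s. x k s - \<gamma> *\<^sub>R g k s)" by (rule ext) (rule step_x)
      ultimately show ?case by simp
    qed
  qed
  have xM[measurable]: "\<And>k. x k \<in> borel_measurable M" by (rule measurable_from_subalg[OF space(2) xF])
  have gM[measurable]: "\<And>k. g k \<in> borel_measurable M" by (rule measurable_from_subalg[OF space(2) init(2)])
  define Pw where "Pw = measure_pmf (bernoulli_pmf p) \<Otimes>\<^sub>M (PiM Gs ND \<Otimes>\<^sub>M PiM Gs (\<lambda>_. NQ))"
  define W where "W k s = (cc k s, restrict (\<lambda>i. \<xi> k i s) Gs, restrict (\<lambda>i. \<eta> k i s) Gs)" for k s
  have WF: "\<And>k. W k \<in> F (Suc k) \<rightarrow>\<^sub>M Pw" using fresh(1) unfolding W_def Pw_def .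
  have WM[measurable]: "\<And>k. W k \<in> M \<rightarrow>\<^sub>M Pw" by (rule measurable_from_subalg[OF space(2) WF])
  have Pwprob: "prob_space Pw"
  proof -
    interpret A: prob_space "measure_pmf (bernoulli_pmf p)" by (rule prob_space_measure_pmf)
    interpret B: prob_space "PiM Gs ND \<Otimes>\<^sub>M PiM Gs (\<lambda>_. NQ)" by (rule I.prob_inner)
    interpret pair_prob_space "measure_pmf (bernoulli_pmf p)" "PiM Gs ND \<Otimes>\<^sub>M PiM Gs (\<lambda>_. NQ)" ..
    show ?thesis unfolding Pw_def by (rule prob_space_axioms)
  qed
  have XF: "\<And>k. (\<lambda>s. (x k s, g k s)) \<in> F k \<rightarrow>\<^sub>M borel \<Otimes>\<^sub>M borel"
    by (rule measurable_Pair[OF xF init(2)])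
  have indep: "\<And>k A S. A \<in> sets (F k) \<Longrightarrow> S \<in> sets Pw \<Longrightarrow>
      measure M (A \<inter> {s \<in> space M. W k s \<in> S}) = measure M A * measure Pw S"
    using fresh(2) unfolding W_def Pw_def .
  have gw_eq: "\<And>k i s. i \<in> Gs \<Longrightarrow> gw (Suc k) i s = phi gradfi Q Dh i (x k s - \<gamma> *\<^sub>R g k s) (x k s) (g k s) (W k s)"
    using good_update step_x by (simp add: phi_def W_def)
  have FP: "\<And>k h. h \<in> borel_measurable ((borel \<Otimes>\<^sub>M borel) \<Otimes>\<^sub>M Pw) \<Longrightarrow>
      (\<integral>\<^sup>+s. h ((x k s, g k s), W k s) \<partial>M)
      = (\<integral>\<^sup>+z. \<integral>\<^sup>+w. h (z, w) \<partial>Pw \<partial>distr M (borel \<Otimes>\<^sub>M borel) (\<lambda>s. (x k s, g k s)))"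
    by (rule fresh_prod[OF space(1) space(2) Pwprob XF WM indep])
  have FD: "\<And>k \<phi>. \<phi> \<in> borel_measurable (borel \<Otimes>\<^sub>M borel) \<Longrightarrow>
      (\<integral>\<^sup>+z. \<phi> z \<partial>distr M (borel \<Otimes>\<^sub>M borel) (\<lambda>s. (x k s, g k s))) = (\<integral>\<^sup>+s. \<phi> (x k s, g k s) \<partial>M)"
    by (rule nn_integral_distr) measurable
  have phim[measurable]: "\<And>i. i \<in> Gs \<Longrightarrow> (\<lambda>zw. phi gradfi Q Dh i (fst (fst zw) - \<gamma> *\<^sub>R snd (fst zw)) (fst (fst zw)) (snd (fst zw)) (snd zw))
      \<in> borel_measurable ((borel \<Otimes>\<^sub>M borel) \<Otimes>\<^sub>M Pw)"
    by (rule I.phi_meas_gen) (auto simp: Pw_def)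
  define Tc where "Tc = ((1 + \<omega>) * (LL^2 / real b) + \<omega> * (L^2 + Lpm^2)) / G"
  define S2 where "S2 = (1 + \<omega>) * Lpm^2 + (1 + \<omega>) * (LL^2 / real b) + \<omega> * L^2"
  have p01: "0 \<le> p" "p \<le> 1" using params by auto
  have XWM: "\<And>k. (\<lambda>s. ((x k s, g k s), W k s)) \<in> M \<rightarrow>\<^sub>M (borel \<Otimes>\<^sub>M borel) \<Otimes>\<^sub>M Pw" by measurable
  have gwm[measurable]: "\<And>k i. i \<in> Gs \<Longrightarrow> (\<lambda>s. gw (Suc k) i s) \<in> borel_measurable M"
  proof -
    fix k i assume i: "i \<in> Gs"
    have "(\<lambda>s. gw (Suc k) i s) = (\<lambda>s. (\<lambda>zw. phi gradfi Q Dh i (fst (fst zw) - \<gamma> *\<^sub>R snd (fst zw)) (fst (fst zw)) (snd (fst zw)) (snd zw)) ((x k s, g k s), W k s))"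
      using i by (simp add: gw_eq fun_eq_iff)
    also have "\<dots> \<in> borel_measurable M" by (rule measurable_compose[OF XWM phim[OF i]])
    finally show "(\<lambda>s. gw (Suc k) i s) \<in> borel_measurable M" .
  qed
  have K1: "\<And>k. (\<integral>\<^sup>+s. ennreal ((norm ((1 / G) *\<^sub>R (\<Sum>i\<in>Gs. gw (Suc k) i s) - gradf (x (Suc k) s)))^2) \<partial>M)
     \<le> ennreal (1 - p) * (\<integral>\<^sup>+s. ennreal ((norm (g k s - gradf (x k s)))^2 + Tc * (norm (x (Suc k) s - x k s))^2) \<partial>M)"
  proof -
    fix k
    let ?h = "\<lambda>zw. ennreal ((norm ((1 / G) *\<^sub>R (\<Sum>i\<in>Gs. phi gradfi Q Dh i (fst (fst zw) - \<gamma> *\<^sub>R snd (fst zw)) (fst (fst zw)) (snd (fst zw)) (snd zw)) - gradf (fst (fst zw) - \<gamma> *\<^sub>R snd (fst zw))))^2)"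
    let ?b = "\<lambda>z. ennreal ((norm (snd z - gradf (fst z)))^2 + Tc * (norm ((fst z - \<gamma> *\<^sub>R snd z) - fst z))^2)"
    have hm: "?h \<in> borel_measurable ((borel \<Otimes>\<^sub>M borel) \<Otimes>\<^sub>M Pw)" by measurable
    have "(\<integral>\<^sup>+s. ennreal ((norm ((1 / G) *\<^sub>R (\<Sum>i\<in>Gs. gw (Suc k) i s) - gradf (x (Suc k) s)))^2) \<partial>M)
        = (\<integral>\<^sup>+s. ?h ((x k s, g k s), W k s) \<partial>M)"
    proof (intro nn_integral_cong)
      fix s
      have "(\<Sum>i\<in>Gs. gw (Suc k) i s) = (\<Sum>i\<in>Gs. phi gradfi Q Dh i (x k s - \<gamma> *\<^sub>R g k s) (x k s) (g k s) (W k s))"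
        by (rule sum.cong) (auto simp: gw_eq)
      then show "ennreal ((norm ((1 / G) *\<^sub>R (\<Sum>i\<in>Gs. gw (Suc k) i s) - gradf (x (Suc k) s)))^2) = ?h ((x k s, g k s), W k s)"
        by (simp add: step_x)
    qed
    also have "\<dots> = (\<integral>\<^sup>+z. \<integral>\<^sup>+w. ?h (z, w) \<partial>Pw \<partial>distr M (borel \<Otimes>\<^sub>M borel) (\<lambda>s. (x k s, g k s)))"
      by (rule FP[OF hm])
    also have "\<dots> \<le> (\<integral>\<^sup>+z. ennreal (1 - p) * ?b z \<partial>distr M (borel \<Otimes>\<^sub>M borel) (\<lambda>s. (x k s, g k s)))"
    proof (rule nn_integral_mono)
      fix z :: "'a \<times> 'a"
      obtain xx gg where z: "z = (xx, gg)" by (cases z)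
      show "(\<integral>\<^sup>+w. ?h (z, w) \<partial>Pw) \<le> ennreal (1 - p) * ?b z"
        using I.I1[OF p01, of "xx - \<gamma> *\<^sub>R gg" xx gg] unfolding z Pw_def Tc_def G_def by simp
    qed
    also have "\<dots> = ennreal (1 - p) * (\<integral>\<^sup>+z. ?b z \<partial>distr M (borel \<Otimes>\<^sub>M borel) (\<lambda>s. (x k s, g k s)))"
      by (rule nn_integral_cmult) measurable
    also have "(\<integral>\<^sup>+z. ?b z \<partial>distr M (borel \<Otimes>\<^sub>M borel) (\<lambda>s. (x k s, g k s))) = (\<integral>\<^sup>+s. ?b (x k s, g k s) \<partial>M)"
      by (rule FD) measurable
    finally show "(\<integral>\<^sup>+s. ennreal ((norm ((1 / G) *\<^sub>R (\<Sum>i\<in>Gs. gw (Suc k) i s) - gradf (x (Suc k) s)))^2) \<partial>M)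
     \<le> ennreal (1 - p) * (\<integral>\<^sup>+s. ennreal ((norm (g k s - gradf (x k s)))^2 + Tc * (norm (x (Suc k) s - x k s))^2) \<partial>M)"
      by (simp add: step_x)
  qed
  have K2: "\<And>k. (\<Sum>i\<in>Gs. \<Sum>l\<in>Gs. \<integral>\<^sup>+s. ennreal ((norm (gw (Suc k) i s - gw (Suc k) l s))^2) \<partial>M)
     \<le> (\<integral>\<^sup>+s. ennreal (p * (2 * G^2 * (B * (norm (gradf (x (Suc k) s)))^2 + \<zeta>^2)))
            + ennreal ((1 - p) * (2 * G^2 * S2 * (norm (x (Suc k) s - x k s))^2)) \<partial>M)"
  proof -
    fix k
    let ?h = "\<lambda>zw. (\<Sum>i\<in>Gs. \<Sum>l\<in>Gs. ennreal ((norm (phi gradfi Q Dh i (fst (fst zw) - \<gamma> *\<^sub>R snd (fst zw)) (fst (fst zw)) (snd (fst zw)) (snd zw)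
         - phi gradfi Q Dh l (fst (fst zw) - \<gamma> *\<^sub>R snd (fst zw)) (fst (fst zw)) (snd (fst zw)) (snd zw)))^2))"
    let ?b = "\<lambda>z. ennreal (p * (2 * G^2 * (B * (norm (gradf (fst z - \<gamma> *\<^sub>R snd z)))^2 + \<zeta>^2)))
            + ennreal ((1 - p) * (2 * G^2 * S2 * (norm ((fst z - \<gamma> *\<^sub>R snd z) - fst z))^2))"
    have hm: "?h \<in> borel_measurable ((borel \<Otimes>\<^sub>M borel) \<Otimes>\<^sub>M Pw)" by measurable
    have "(\<Sum>i\<in>Gs. \<Sum>l\<in>Gs. \<integral>\<^sup>+s. ennreal ((norm (gw (Suc k) i s - gw (Suc k) l s))^2) \<partial>M)
        = (\<integral>\<^sup>+s. (\<Sum>i\<in>Gs. \<Sum>l\<in>Gs. ennreal ((norm (gw (Suc k) i s - gw (Suc k) l s))^2)) \<partial>M)"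
    proof -
      have "(\<Sum>i\<in>Gs. \<Sum>l\<in>Gs. \<integral>\<^sup>+s. ennreal ((norm (gw (Suc k) i s - gw (Suc k) l s))^2) \<partial>M)
          = (\<Sum>i\<in>Gs. \<integral>\<^sup>+s. (\<Sum>l\<in>Gs. ennreal ((norm (gw (Suc k) i s - gw (Suc k) l s))^2)) \<partial>M)"
        by (intro sum.cong refl nn_integral_sum[symmetric]) measurable
      also have "\<dots> = (\<integral>\<^sup>+s. (\<Sum>i\<in>Gs. \<Sum>l\<in>Gs. ennreal ((norm (gw (Suc k) i s - gw (Suc k) l s))^2)) \<partial>M)"
        by (intro nn_integral_sum[symmetric]) measurable
      finally show ?thesis .
    qed
    also have "\<dots> = (\<integral>\<^sup>+s. ?h ((x k s, g k s), W k s) \<partial>M)"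
      by (intro nn_integral_cong sum.cong refl) (simp add: gw_eq)
    also have "\<dots> = (\<integral>\<^sup>+z. \<integral>\<^sup>+w. ?h (z, w) \<partial>Pw \<partial>distr M (borel \<Otimes>\<^sub>M borel) (\<lambda>s. (x k s, g k s)))"
      by (rule FP[OF hm])
    also have "\<dots> \<le> (\<integral>\<^sup>+z. ?b z \<partial>distr M (borel \<Otimes>\<^sub>M borel) (\<lambda>s. (x k s, g k s)))"
    proof (rule nn_integral_mono)
      fix z :: "'a \<times> 'a"
      obtain xx gg where z: "z = (xx, gg)" by (cases z)
      show "(\<integral>\<^sup>+w. ?h (z, w) \<partial>Pw) \<le> ?b z"
        using I.I2[OF p01, of "xx - \<gamma> *\<^sub>R gg" xx gg] unfolding z Pw_def S2_def G_def by simp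
    qed
    also have "(\<integral>\<^sup>+z. ?b z \<partial>distr M (borel \<Otimes>\<^sub>M borel) (\<lambda>s. (x k s, g k s))) = (\<integral>\<^sup>+s. ?b (x k s, g k s) \<partial>M)"
      by (rule FD) measurable
    finally show "(\<Sum>i\<in>Gs. \<Sum>l\<in>Gs. \<integral>\<^sup>+s. ennreal ((norm (gw (Suc k) i s - gw (Suc k) l s))^2) \<partial>M)
     \<le> (\<integral>\<^sup>+s. ennreal (p * (2 * G^2 * (B * (norm (gradf (x (Suc k) s)))^2 + \<zeta>^2)))
            + ennreal ((1 - p) * (2 * G^2 * S2 * (norm (x (Suc k) s - x k s))^2)) \<partial>M)"
      by (simp add: step_x)
  qed
  define K0 where "K0 = c * \<delta> / (G * (G - 1))"
  have K0nn: "K0 \<ge> 0" unfolding K0_def using params byz G2 by simp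
  define B1 where "B1 k s = (norm (g k s - gradf (x k s)))^2 + Tc * (norm (x (Suc k) s - x k s))^2" for k s
  define B2 where "B2 k s = p * (2 * G^2 * (B * (norm (gradf (x (Suc k) s)))^2 + \<zeta>^2)) + (1 - p) * (2 * G^2 * S2 * (norm (x (Suc k) s - x k s))^2)" for k s
  define Z where "Z k s = (1 + p/2) * (1 - p) * B1 k s + (1 + 2/p) * K0 * B2 k s" for k s
  have Tcnn: "Tc \<ge> 0" unfolding Tc_def using Gpos compressor(2) A4(1) by simp
  have S2nn: "S2 \<ge> 0" unfolding S2_def using compressor(2) A4(1) by simp
  have B1nn: "\<And>k s. B1 k s \<ge> 0" unfolding B1_def using Tcnn by simp
  have B2nn: "\<And>k s. B2 k s \<ge> 0" unfolding B2_def using p01 S2nn A2(1) by (intro add_nonneg_nonneg mult_nonneg_nonneg) auto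
  have B1m[measurable]: "\<And>k. B1 k \<in> borel_measurable M" unfolding B1_def by measurable
  have B2m[measurable]: "\<And>k. B2 k \<in> borel_measurable M" unfolding B2_def by measurable
  have V: "\<And>k. (\<integral>\<^sup>+s. ennreal ((norm (g (Suc k) s - gradf (x (Suc k) s)))^2) \<partial>M) \<le> (\<integral>\<^sup>+s. ennreal (Z k s) \<partial>M)"
  proof -
    fix k
    define gb where "gb s = (1 / G) *\<^sub>R (\<Sum>i\<in>Gs. gw (Suc k) i s)" for s
    have gbm[measurable]: "gb \<in> borel_measurable M" unfolding gb_def by measurable
    have gSm[measurable]: "g (Suc k) \<in> borel_measurable M" by (rule gM)
    have "(\<integral>\<^sup>+s. ennreal ((norm (g (Suc k) s - gradf (x (Suc k) s)))^2) \<partial>M)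
        \<le> (\<integral>\<^sup>+s. ennreal (1 + p/2) * ennreal ((norm (gb s - gradf (x (Suc k) s)))^2)
              + ennreal (1 + 2/p) * ennreal ((norm (g (Suc k) s - gb s))^2) \<partial>M)"
    proof (rule nn_integral_mono)
      fix s
      have "(norm (g (Suc k) s - gradf (x (Suc k) s)))^2 = (norm ((gb s - gradf (x (Suc k) s)) + (g (Suc k) s - gb s)))^2"
        by simp
      also have "\<dots> \<le> (1 + p/2) * (norm (gb s - gradf (x (Suc k) s)))^2 + (1 + 1 / (p/2)) * (norm (g (Suc k) s - gb s))^2"
        by (rule sq_young) (use params in simp)
      also have "1 + 1 / (p/2) = 1 + 2/p" by simp
      finally show "ennreal ((norm (g (Suc k) s - gradf (x (Suc k) s)))^2)
          \<le> ennreal (1 + p/2) * ennreal ((norm (gb s - gradf (x (Suc k) s)))^2)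
              + ennreal (1 + 2/p) * ennreal ((norm (g (Suc k) s - gb s))^2)"
        using params by (simp add: ennreal_mult[symmetric] ennreal_plus[symmetric] del: ennreal_plus)
    qed
    also have "\<dots> = ennreal (1 + p/2) * (\<integral>\<^sup>+s. ennreal ((norm (gb s - gradf (x (Suc k) s)))^2) \<partial>M)
        + ennreal (1 + 2/p) * (\<integral>\<^sup>+s. ennreal ((norm (g (Suc k) s - gb s))^2) \<partial>M)"
      by (simp add: nn_integral_add nn_integral_cmult)
    also have "\<dots> \<le> ennreal (1 + p/2) * (ennreal (1 - p) * (\<integral>\<^sup>+s. ennreal (B1 k s) \<partial>M))
        + ennreal (1 + 2/p) * (ennreal K0 * (\<integral>\<^sup>+s. ennreal (B2 k s) \<partial>M))"
    proof (intro add_mono mult_left_mono)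
      show "(\<integral>\<^sup>+s. ennreal ((norm (gb s - gradf (x (Suc k) s)))^2) \<partial>M) \<le> ennreal (1 - p) * (\<integral>\<^sup>+s. ennreal (B1 k s) \<partial>M)"
        using K1[of k] unfolding gb_def B1_def .
      have "(\<integral>\<^sup>+s. ennreal ((norm (g (Suc k) s - gb s))^2) \<partial>M)
          \<le> ennreal K0 * (\<Sum>i\<in>Gs. \<Sum>l\<in>Gs. \<integral>\<^sup>+s. ennreal ((norm (gw (Suc k) i s - gw (Suc k) l s))^2) \<partial>M)"
        using R[of k] unfolding gb_def K0_def .
      also have "\<dots> \<le> ennreal K0 * (\<integral>\<^sup>+s. ennreal (B2 k s) \<partial>M)"
      proof (rule mult_left_mono)
        have "(\<integral>\<^sup>+s. ennreal (B2 k s) \<partial>M) = (\<integral>\<^sup>+s. ennreal (p * (2 * G^2 * (B * (norm (gradf (x (Suc k) s)))^2 + \<zeta>^2)))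
            + ennreal ((1 - p) * (2 * G^2 * S2 * (norm (x (Suc k) s - x k s))^2)) \<partial>M)"
        proof (intro nn_integral_cong)
          fix s
          have a: "0 \<le> p * (2 * G^2 * (B * (norm (gradf (x (Suc k) s)))^2 + \<zeta>^2))"
            using p01 A2(1) by (intro mult_nonneg_nonneg add_nonneg_nonneg) auto
          have b: "0 \<le> (1 - p) * (2 * G^2 * S2 * (norm (x (Suc k) s - x k s))^2)"
            using p01 S2nn by (intro mult_nonneg_nonneg) auto
          show "ennreal (B2 k s) = ennreal (p * (2 * G^2 * (B * (norm (gradf (x (Suc k) s)))^2 + \<zeta>^2)))
            + ennreal ((1 - p) * (2 * G^2 * S2 * (norm (x (Suc k) s - x k s))^2))"
            unfolding B2_def by (rule ennreal_plus[OF a b])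
        qed
        then show "(\<Sum>i\<in>Gs. \<Sum>l\<in>Gs. \<integral>\<^sup>+s. ennreal ((norm (gw (Suc k) i s - gw (Suc k) l s))^2) \<partial>M)
            \<le> (\<integral>\<^sup>+s. ennreal (B2 k s) \<partial>M)" using K2[of k] by simp
      qed simp
      finally show "(\<integral>\<^sup>+s. ennreal ((norm (g (Suc k) s - gb s))^2) \<partial>M) \<le> ennreal K0 * (\<integral>\<^sup>+s. ennreal (B2 k s) \<partial>M)" .
    qed simp_all
    also have "\<dots> = (\<integral>\<^sup>+s. ennreal (Z k s) \<partial>M)"
    proof -
      have a: "0 \<le> (1 + p/2) * (1 - p)" using p01 by simp
      have b: "0 \<le> (1 + 2/p) * K0" using p01 K0nn by simp
      have "(\<integral>\<^sup>+s. ennreal (Z k s) \<partial>M) = (\<integral>\<^sup>+s. ennreal ((1 + p/2) * (1 - p)) * ennreal (B1 k s) + ennreal ((1 + 2/p) * K0) * ennreal (B2 k s) \<partial>M)"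
      proof (intro nn_integral_cong)
        fix s
        have "ennreal (Z k s) = ennreal ((1 + p/2) * (1 - p) * B1 k s) + ennreal ((1 + 2/p) * K0 * B2 k s)"
          unfolding Z_def by (rule ennreal_plus) (use a b B1nn B2nn in auto)
        then show "ennreal (Z k s) = ennreal ((1 + p/2) * (1 - p)) * ennreal (B1 k s) + ennreal ((1 + 2/p) * K0) * ennreal (B2 k s)"
          using a b B1nn B2nn by (simp add: ennreal_mult)
      qed
      also have "\<dots> = ennreal ((1 + p/2) * (1 - p)) * (\<integral>\<^sup>+s. ennreal (B1 k s) \<partial>M) + ennreal ((1 + 2/p) * K0) * (\<integral>\<^sup>+s. ennreal (B2 k s) \<partial>M)"
        by (simp add: nn_integral_add nn_integral_cmult)
      finally show ?thesis using p01 K0nn by (simp add: ennreal_mult mult.assoc)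
    qed
    finally show "(\<integral>\<^sup>+s. ennreal ((norm (g (Suc k) s - gradf (x (Suc k) s)))^2) \<partial>M) \<le> (\<integral>\<^sup>+s. ennreal (Z k s) \<partial>M)" .
  qed
  have fstar_le: "\<And>y. fstar \<le> f y"
    unfolding fstar_def f_def by (rule cINF_lower[OF A1(2)[unfolded f_def]]) simp
  define Acst where "Acst = constA B L c \<delta> p G \<omega> LL (real b) Lpm"
  have cd: "0 \<le> c * \<delta>" using params byz by simp
  have Ann: "Acst \<ge> 0"
    unfolding Acst_def constA_def using params byz A2(1) Gpos compressor(2) A4(1) Lnn
    by (intro add_nonneg_nonneg mult_nonneg_nonneg divide_nonneg_pos) auto
  have stepb: "\<gamma>^2 * Acst \<le> 1 - L * \<gamma>"
    by (rule stepsize_bound[OF params(3) stepsize[folded Acst_def] Ann Lnn])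
  have Lg: "L * \<gamma> \<le> 1"
  proof -
    have "0 \<le> \<gamma>^2 * Acst" using Ann by simp
    then show ?thesis using stepb by linarith
  qed
  define ev where "ev k s = (norm (g k s - gradf (x k s)))^2" for k s
  define dv where "dv k s = (norm (gradf (x k s)))^2" for k s
  define rv where "rv k s = (norm (g k s))^2" for k s
  define av where "av k s = f (x k s) - fstar" for k s
  define xv where "xv k s = (norm (x k s - x0))^2" for k s
  have evm[measurable]: "\<And>k. ev k \<in> borel_measurable M" unfolding ev_def by measurable
  have dvm[measurable]: "\<And>k. dv k \<in> borel_measurable M" unfolding dv_def by measurable
  have rvm[measurable]: "\<And>k. rv k \<in> borel_measurable M" unfolding rv_def by measurable
  have avm[measurable]: "\<And>k. av k \<in> borel_measurable M" unfolding av_def by measurable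
  have xvm[measurable]: "\<And>k. xv k \<in> borel_measurable M" unfolding xv_def by measurable
  have avnn: "\<And>k s. av k s \<ge> 0" unfolding av_def using fstar_le by simp
  have xstep: "\<And>k s. (norm (x (Suc k) s - x k s))^2 = \<gamma>^2 * rv k s"
    unfolding rv_def step_x using params by (simp add: power_mult_distrib)
  have desc: "\<And>k s. av (Suc k) s + \<gamma>/2 * dv k s + \<gamma>/2 * (1 - L * \<gamma>) * rv k s \<le> av k s + \<gamma>/2 * ev k s"
  proof -
    fix k s
    let ?x = "x k s" and ?g = "g k s"
    have d: "f (x (Suc k) s) \<le> f ?x + gradf ?x \<bullet> (x (Suc k) s - ?x) + L / 2 * (norm (x (Suc k) s - ?x))^2"
      by (rule descent[OF gf_deriv A1(1)])
    have e1: "gradf ?x \<bullet> (x (Suc k) s - ?x) = - \<gamma> * (?g \<bullet> gradf ?x)"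
      by (simp add: step_x inner_commute)
    have e2: "(norm (?g - gradf ?x))^2 = (norm ?g)^2 - 2 * (?g \<bullet> gradf ?x) + (norm (gradf ?x))^2"
      by (rule norm_diff_sq)
    have e3: "(norm (x (Suc k) s - ?x))^2 = \<gamma>^2 * (norm ?g)^2"
      using xstep[of k s] unfolding rv_def .
    show "av (Suc k) s + \<gamma>/2 * dv k s + \<gamma>/2 * (1 - L * \<gamma>) * rv k s \<le> av k s + \<gamma>/2 * ev k s"
    proof -
      have d': "f (x (Suc k) s) \<le> f ?x - \<gamma> * (?g \<bullet> gradf ?x) + L / 2 * (\<gamma>^2 * (norm ?g)^2)"
        using d unfolding e1 e3 by simp
      have l: "av (Suc k) s + \<gamma>/2 * dv k s + \<gamma>/2 * (1 - L * \<gamma>) * rv k s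
          = f (x (Suc k) s) - fstar + \<gamma>/2 * (norm (gradf ?x))^2 + \<gamma>/2 * (norm ?g)^2 - L / 2 * (\<gamma>^2 * (norm ?g)^2)"
        unfolding av_def dv_def rv_def by (simp add: field_simps power2_eq_square)
      have r: "av k s + \<gamma>/2 * ev k s = f ?x - fstar + \<gamma>/2 * (norm ?g)^2 - \<gamma> * (?g \<bullet> gradf ?x) + \<gamma>/2 * (norm (gradf ?x))^2"
        unfolding av_def ev_def e2 by (simp add: algebra_simps)
      show ?thesis unfolding l r using d' by linarith
    qed
  qed
  have gfL: "\<And>y z. (norm (gradf y))^2 \<le> 2 * (norm (gradf z))^2 + 2 * L^2 * (norm (y - z))^2"
  proof -
    fix y z :: 'a
    have "norm (gradf y) \<le> norm (gradf z) + L * norm (y - z)"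
      using A1(1)[of y z] norm_triangle_ineq2[of "gradf y" "gradf z"] by linarith
    then have "(norm (gradf y))^2 \<le> (norm (gradf z) + L * norm (y - z))^2"
      by (rule power_mono) simp
    also have "\<dots> \<le> 2 * (norm (gradf z))^2 + 2 * (L * norm (y - z))^2"
      by (simp add: power2_sum) (smt (verit) sum_squares_bound)
    finally show "(norm (gradf y))^2 \<le> 2 * (norm (gradf z))^2 + 2 * L^2 * (norm (y - z))^2"
      by (simp add: power_mult_distrib)
  qed
  have sq2: "\<And>u v :: 'a. (norm (u + v))^2 \<le> 2 * (norm u)^2 + 2 * (norm v)^2"
  proof -
    fix u v :: 'a
    have "(norm (u + v))^2 \<le> (norm u + norm v)^2" by (rule power_mono[OF norm_triangle_ineq]) simp
    also have "\<dots> \<le> 2 * (norm u)^2 + 2 * (norm v)^2"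
      by (simp add: power2_sum) (smt (verit) sum_squares_bound)
    finally show "(norm (u + v))^2 \<le> 2 * (norm u)^2 + 2 * (norm v)^2" .
  qed
  have dstep: "\<And>k s. dv (Suc k) s \<le> 2 * dv k s + 2 * L^2 * \<gamma>^2 * rv k s"
    unfolding dv_def using gfL xstep by (metis mult.assoc)
  have rb: "\<And>k s. rv k s \<le> 2 * ev k s + 2 * dv k s"
    unfolding rv_def ev_def dv_def using sq2 by (metis diff_add_cancel)
  have db0: "\<And>k s. dv k s \<le> 2 * (norm (gradf x0))^2 + 2 * L^2 * xv k s"
    unfolding dv_def xv_def by (rule gfL)
  have xvs: "\<And>k s. xv (Suc k) s \<le> 2 * xv k s + 2 * (\<gamma>^2 * rv k s)"
  proof -
    fix k s
    have "xv (Suc k) s = (norm ((x k s - x0) + (x (Suc k) s - x k s)))^2" unfolding xv_def by simp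
    also have "\<dots> \<le> 2 * (norm (x k s - x0))^2 + 2 * (norm (x (Suc k) s - x k s))^2" by (rule sq2)
    finally show "xv (Suc k) s \<le> 2 * xv k s + 2 * (\<gamma>^2 * rv k s)" unfolding xv_def xstep .
  qed
  have ibound: "\<And>(u::'w \<Rightarrow> real) v. integrable M v \<Longrightarrow> u \<in> borel_measurable M \<Longrightarrow> (\<And>s. 0 \<le> u s) \<Longrightarrow> (\<And>s. u s \<le> v s) \<Longrightarrow> integrable M u"
  proof -
    fix u v :: "'w \<Rightarrow> real"
    assume iv: "integrable M v" and um: "u \<in> borel_measurable M" and un: "\<And>s. 0 \<le> u s" and uv: "\<And>s. u s \<le> v s"
    show "integrable M u"
    proof (rule Bochner_Integration.integrable_bound[OF iv um])
      show "AE s in M. norm (u s) \<le> norm (v s)"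
        using un uv by (auto intro!: AE_I2) (smt (verit))
    qed
  qed
  have evnn: "\<And>k s. ev k s \<ge> 0" and dvnn: "\<And>k s. dv k s \<ge> 0" and rvnn: "\<And>k s. rv k s \<ge> 0" and xvnn: "\<And>k s. xv k s \<ge> 0"
    unfolding ev_def dv_def rv_def xv_def by auto
  have x0s: "\<And>s. x 0 s = x0" by (rule init(1))
  have het': "48 * B * c * \<delta> < p" using het by (simp add: mult_ac)
  have hetp: "1 - 48 * B * c * \<delta> / p > 0"
    using het params by (simp add: field_simps)
  show ?thesis
  proof (cases "(\<integral>\<^sup>+s. ennreal (ev 0 s) \<partial>M) = \<infinity>")
    case True
    have "(\<integral>\<^sup>+s. ennreal (f x0 - fstar + \<gamma> / p * (norm (g 0 s - gradf x0))^2) \<partial>M)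
        \<ge> (\<integral>\<^sup>+s. ennreal (\<gamma> / p) * ennreal (ev 0 s) \<partial>M)"
    proof (rule nn_integral_mono)
      fix s
      have "\<gamma> / p * ev 0 s \<le> f x0 - fstar + \<gamma> / p * (norm (g 0 s - gradf x0))^2"
        using fstar_le[of x0] unfolding ev_def x0s by simp
      then show "ennreal (\<gamma> / p) * ennreal (ev 0 s) \<le> ennreal (f x0 - fstar + \<gamma> / p * (norm (g 0 s - gradf x0))^2)"
        using params evnn by (simp add: ennreal_mult[symmetric] ennreal_leI)
    qed
    also have "(\<integral>\<^sup>+s. ennreal (\<gamma> / p) * ennreal (ev 0 s) \<partial>M) = \<infinity>"
      using True params by (simp add: nn_integral_cmult ennreal_mult_top)
    finally have inf: "(\<integral>\<^sup>+s. ennreal (f x0 - fstar + \<gamma> / p * (norm (g 0 s - gradf x0))^2) \<partial>M) = \<infinity>"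
      by (simp add: top_unique)
    have cpos: "2 / (\<gamma> * (1 - 48 * B * c * \<delta> / p) * real (K + 1)) > 0"
      using params hetp by simp
    have t: "ennreal (2 / (\<gamma> * (1 - 48 * B * c * \<delta> / p) * real (K + 1))) * \<infinity> = \<infinity>"
      using cpos params het' by (simp add: ennreal_mult_top)
    show ?thesis unfolding inf t by simp
  next
    case False
    have Int: "\<And>k. integrable M (ev k) \<and> integrable M (xv k) \<and> integrable M (av k)"
    proof -
      fix k show "integrable M (ev k) \<and> integrable M (xv k) \<and> integrable M (av k)"
      proof (induction k)
        case 0
        have "integrable M (ev 0)"
          by (rule integrableI_nonneg[OF evm]) (use False evnn in \<open>auto simp: top.not_eq_extremum\<close>)
        moreover have "xv 0 = (\<lambda>s. 0)" unfolding xv_def x0s by simp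
        moreover have "av 0 = (\<lambda>s. f x0 - fstar)" unfolding av_def x0s by simp
        ultimately show ?case by simp
      next
        case (Suc k)
        then have iev: "integrable M (ev k)" and ixv: "integrable M (xv k)" and iav: "integrable M (av k)" by auto
        have idv: "integrable M (dv k)"
          by (rule ibound[OF _ dvm dvnn db0]) (use ixv in simp)
        have irv: "integrable M (rv k)"
          by (rule ibound[OF _ rvm rvnn rb]) (use iev idv in simp)
        have ixv': "integrable M (xv (Suc k))"
          by (rule ibound[OF _ xvm xvnn xvs]) (use ixv irv in simp)
        have idv': "integrable M (dv (Suc k))"
          by (rule ibound[OF _ dvm dvnn dstep]) (use idv irv in simp)
        have avs: "\<And>s. av (Suc k) s \<le> av k s + \<gamma>/2 * ev k s"
        proof -
          fix s
          have "0 \<le> \<gamma>/2 * dv k s + \<gamma>/2 * (1 - L * \<gamma>) * rv k s"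
            using params Lg dvnn rvnn by (intro add_nonneg_nonneg mult_nonneg_nonneg) auto
          then show "av (Suc k) s \<le> av k s + \<gamma>/2 * ev k s" using desc[of k s] by linarith
        qed
        have iav': "integrable M (av (Suc k))"
          by (rule ibound[OF _ avm avnn avs]) (use iav iev in simp)
        have Zeq: "Z k = (\<lambda>s. (1+p/2)*(1-p)*(ev k s + Tc*\<gamma>^2*rv k s) + (1+2/p)*K0*(p*(2*G^2*(B*dv (Suc k) s + \<zeta>^2)) + (1-p)*(2*G^2*S2*\<gamma>^2*rv k s)))"
          unfolding Z_def B1_def B2_def xstep ev_def dv_def by (simp add: fun_eq_iff mult.assoc)
        have iZ: "integrable M (Z k)" unfolding Zeq using iev irv idv' by simp
        have Znn: "\<And>s. Z k s \<ge> 0" unfolding Z_def using B1nn B2nn p01 K0nn by simp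
        have iev': "integrable M (ev (Suc k))"
        proof (rule integrableI_nonneg[OF evm])
          show "AE s in M. 0 \<le> ev (Suc k) s" using evnn by simp
          have "(\<integral>\<^sup>+s. ennreal (ev (Suc k) s) \<partial>M) \<le> (\<integral>\<^sup>+s. ennreal (Z k s) \<partial>M)"
            using V[of k] unfolding ev_def .
          also have "\<dots> = ennreal (\<integral>s. Z k s \<partial>M)" by (rule nn_integral_eq_integral[OF iZ]) (use Znn in simp)
          also have "\<dots> < \<infinity>" by simp
          finally show "(\<integral>\<^sup>+s. ennreal (ev (Suc k) s) \<partial>M) < \<infinity>" .
        qed
        show ?case using iev' ixv' iav' by simp
      qed
    qed
    have iev: "\<And>k. integrable M (ev k)" and ixv: "\<And>k. integrable M (xv k)" and iav: "\<And>k. integrable M (av k)"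
      using Int by auto
    have idv: "\<And>k. integrable M (dv k)"
      by (rule ibound[OF _ dvm dvnn db0]) (use ixv in simp)
    have irv: "\<And>k. integrable M (rv k)"
      by (rule ibound[OF _ rvm rvnn rb]) (use iev idv in simp)
    define a where "a k = (\<integral>s. av k s \<partial>M)" for k
    define e where "e k = (\<integral>s. ev k s \<partial>M)" for k
    define d where "d k = (\<integral>s. dv k s \<partial>M)" for k
    define r where "r k = (\<integral>s. rv k s \<partial>M)" for k
    have ann: "\<And>k. a k \<ge> 0" unfolding a_def using avnn by (simp add: integral_nonneg)
    have enn: "\<And>k. e k \<ge> 0" unfolding e_def using evnn by (simp add: integral_nonneg)
    have dnn: "\<And>k. d k \<ge> 0" unfolding d_def using dvnn by (simp add: integral_nonneg)
    have rnn: "\<And>k. r k \<ge> 0" unfolding r_def using rvnn by (simp add: integral_nonneg)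
    have D1: "\<And>k. a (Suc k) + \<gamma>/2*d k + \<gamma>/2*(1 - L*\<gamma>)*r k \<le> a k + \<gamma>/2*e k"
    proof -
      fix k
      have "(\<integral>s. av (Suc k) s + \<gamma>/2 * dv k s + \<gamma>/2 * (1 - L * \<gamma>) * rv k s \<partial>M) \<le> (\<integral>s. av k s + \<gamma>/2 * ev k s \<partial>M)"
        by (rule integral_mono) (use desc iav idv irv iev in auto)
      then show "a (Suc k) + \<gamma>/2*d k + \<gamma>/2*(1 - L*\<gamma>)*r k \<le> a k + \<gamma>/2*e k"
        by (simp add: a_def d_def r_def e_def iav idv irv iev)
    qed
    have D2: "\<And>k. d (Suc k) \<le> 2*d k + 2*L^2*\<gamma>^2*r k"
    proof -
      fix k
      have "(\<integral>s. dv (Suc k) s \<partial>M) \<le> (\<integral>s. 2 * dv k s + 2 * L^2 * \<gamma>^2 * rv k s \<partial>M)"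
        by (rule integral_mono) (use dstep idv irv in auto)
      then show "d (Suc k) \<le> 2*d k + 2*L^2*\<gamma>^2*r k"
        by (simp add: d_def r_def idv irv)
    qed
    have V1: "\<And>k. e (Suc k) \<le> (1+p/2)*(1-p)*(e k + Tc*\<gamma>^2*r k) + (1+2/p)*K0*(p*(2*G^2*(B*d (Suc k) + \<zeta>^2)) + (1-p)*(2*G^2*S2*\<gamma>^2*r k))"
    proof -
      fix k
      have Zeq: "Z k = (\<lambda>s. (1+p/2)*(1-p)*(ev k s + Tc*\<gamma>^2*rv k s) + (1+2/p)*K0*(p*(2*G^2*(B*dv (Suc k) s + \<zeta>^2)) + (1-p)*(2*G^2*S2*\<gamma>^2*rv k s)))"
        unfolding Z_def B1_def B2_def xstep ev_def dv_def by (simp add: fun_eq_iff mult.assoc)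
      have iZ: "integrable M (Z k)" unfolding Zeq using iev irv idv by simp
      have Znn: "\<And>s. Z k s \<ge> 0" unfolding Z_def using B1nn B2nn p01 K0nn by simp
      have "ennreal (e (Suc k)) = (\<integral>\<^sup>+s. ennreal (ev (Suc k) s) \<partial>M)"
        unfolding e_def by (rule nn_integral_eq_integral[OF iev, symmetric]) (use evnn in simp)
      also have "\<dots> \<le> (\<integral>\<^sup>+s. ennreal (Z k s) \<partial>M)" using V[of k] unfolding ev_def .
      also have "\<dots> = ennreal (\<integral>s. Z k s \<partial>M)" by (rule nn_integral_eq_integral[OF iZ]) (use Znn in simp)
      finally have "e (Suc k) \<le> (\<integral>s. Z k s \<partial>M)"
        using Znn by (simp add: ennreal_le_iff integral_nonneg)
      also have "(\<integral>s. Z k s \<partial>M) = (1+p/2)*(1-p)*(e k + Tc*\<gamma>^2*r k) + (1+2/p)*K0*(p*(2*G^2*(B*d (Suc k) + \<zeta>^2)) + (1-p)*(2*G^2*S2*\<gamma>^2*r k))"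
        unfolding Zeq e_def r_def d_def using iev irv idv by (simp add: MP.prob_space)
      finally show "e (Suc k) \<le> (1+p/2)*(1-p)*(e k + Tc*\<gamma>^2*r k) + (1+2/p)*K0*(p*(2*G^2*(B*d (Suc k) + \<zeta>^2)) + (1-p)*(2*G^2*S2*\<gamma>^2*r k))" .
    qed
    have Kb: "K0*(2*G^2) \<le> 4*c*\<delta>"
    proof -
      have G1: "G - 1 > 0" using G2 by simp
      have "K0*(2*G^2) = c*\<delta>*(2*G/(G-1))"
        unfolding K0_def using Gpos G1 by (simp add: field_simps power2_eq_square)
      also have "\<dots> \<le> c*\<delta>*4"
      proof (rule mult_left_mono[OF _ cd])
        show "2*G/(G-1) \<le> 4" using G1 G2 by (simp add: divide_le_eq)
      qed
      finally show ?thesis by simp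
    qed
    have Ab: "3*(1-p)*Tc/p + 24*c*\<delta>*(1-p)*S2/p^2 + 48*B*L^2*c*\<delta>/p \<le> Acst"
    proof -
      define u where "u = \<omega>*L^2 + (1+\<omega>)*LL^2/real b"
      have bpos: "real b > 0" using A4(1) by simp
      have e1: "Tc = (u + \<omega>*Lpm^2)/G" unfolding Tc_def u_def by (simp add: algebra_simps)
      have e2: "S2 = u + (1+\<omega>)*Lpm^2" unfolding S2_def u_def by (simp add: algebra_simps)
      have e3: "Acst = 48*B*L^2*c*\<delta>/p + 6*(1-p)/p*(4*c*\<delta>/p + 1/(2*G))*u + 6*(1-p)/p*(4*c*\<delta>*(1+\<omega>)/p + \<omega>/(2*G))*Lpm^2"
        unfolding Acst_def constA_def u_def by simp
      have "3*(1-p)*Tc/p + 24*c*\<delta>*(1-p)*S2/p^2 + 48*B*L^2*c*\<delta>/p = Acst"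
        unfolding e1 e2 e3 using Gpos params by (simp add: field_simps power2_eq_square)
      then show ?thesis by simp
    qed
    define \<Phi> where "\<Phi> k = a k + \<gamma>/p * e k" for k
    define \<alpha> where "\<alpha> = \<gamma>/2*(1 - 48*c*\<delta>*B/p)"
    define \<beta> where "\<beta> = 12*\<gamma>*c*\<delta>*\<zeta>^2/p"
    have Phistep: "\<And>k. \<Phi> (Suc k) + \<alpha> * d k \<le> \<Phi> k + \<beta>"
    proof -
      fix k
      have "a (Suc k) + \<gamma>/p*e (Suc k) + \<gamma>/2*(1 - 48*c*\<delta>*B/p)*d k \<le> a k + \<gamma>/p*e k + 12*\<gamma>*c*\<delta>*\<zeta>^2/p"
        by (rule lyap_step[OF D1 V1 D2 enn dnn rnn dnn Kb K0nn params(1,2,3) A2(1) cd Tcnn S2nn Ab stepb])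
      then show "\<Phi> (Suc k) + \<alpha> * d k \<le> \<Phi> k + \<beta>"
        unfolding \<Phi>_def \<alpha>_def \<beta>_def by (simp add: mult.assoc)
    qed
    have Phinn: "\<And>k. \<Phi> k \<ge> 0" unfolding \<Phi>_def using ann enn params by simp
    have alpos: "\<alpha> > 0" unfolding \<alpha>_def using params hetp by (simp add: mult_ac)
    have avg: "(\<Sum>k<Suc K. d k) / real (Suc K) \<le> \<Phi> 0 / (\<alpha> * real (Suc K)) + \<beta> / \<alpha>"
      by (rule final_avg[where \<Phi>=\<Phi> and d=d and \<alpha>=\<alpha> and \<beta>=\<beta>, OF Phistep Phinn alpos])
    define C1 where "C1 = 2 / (\<gamma> * (1 - 48 * B * c * \<delta> / p) * real (K + 1))"
    define C2 where "C2 = 24 * c * \<delta> * \<zeta>^2 / (p - 48 * B * c * \<delta>)"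
    have C1nn: "C1 \<ge> 0" unfolding C1_def using params hetp by simp
    have C2nn: "C2 \<ge> 0" unfolding C2_def
    proof (rule divide_nonneg_pos)
      have "24 * c * \<delta> * \<zeta>^2 = 24 * (c * \<delta>) * \<zeta>^2" by (simp add: mult_ac)
      moreover have "0 \<le> 24 * (c * \<delta>) * \<zeta>^2"
        by (rule mult_nonneg_nonneg[OF mult_nonneg_nonneg[OF _ cd] zero_le_power2]) simp
      ultimately show "0 \<le> 24 * c * \<delta> * \<zeta>^2" by simp
      show "0 < p - 48 * B * c * \<delta>" using het' by simp
    qed
    have ab1: "\<Phi> 0 / (\<alpha> * real (Suc K)) = C1 * \<Phi> 0"
      unfolding \<alpha>_def C1_def by (simp add: field_simps mult_ac)
    have ab2: "\<beta> / \<alpha> = C2"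
    proof -
      have pne: "p - 48 * B * c * \<delta> \<noteq> 0" using het' by simp
      have p0: "p \<noteq> 0" and g0: "\<gamma> \<noteq> 0" using params by auto
      have "1 - 48*c*\<delta>*B/p = (p - 48 * B * c * \<delta>) / p" using p0 by (simp add: field_simps mult_ac)
      then show ?thesis unfolding \<alpha>_def \<beta>_def C2_def using pne p0 g0 by (simp add: field_simps)
    qed
    have inner: "\<And>k. (\<integral>\<^sup>+s. ennreal ((norm (gradf (x k s)))^2) \<partial>M) = ennreal (d k)"
      unfolding d_def dv_def[symmetric] by (rule nn_integral_eq_integral[OF idv]) (use dvnn in simp)
    have LHS: "(\<integral>\<^sup>+ k. (\<integral>\<^sup>+ s. ennreal ((norm (gradf (x k s)))^2) \<partial>M) \<partial>measure_pmf (pmf_of_set {0..K}))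
        = ennreal ((\<Sum>k<Suc K. d k) / real (Suc K))"
    proof -
      have "(\<integral>\<^sup>+ k. (\<integral>\<^sup>+ s. ennreal ((norm (gradf (x k s)))^2) \<partial>M) \<partial>measure_pmf (pmf_of_set {0..K}))
          = (\<integral>\<^sup>+ k. ennreal (d k) \<partial>measure_pmf (pmf_of_set {0..K}))" by (simp add: inner)
      also have "\<dots> = (\<Sum>k\<in>{0..K}. ennreal (d k)) / of_nat (card {0..K})"
        by (rule nn_integral_pmf_of_set) auto
      also have "\<dots> = ennreal (\<Sum>k<Suc K. d k) / ennreal (real (Suc K))"
        using dnn by (simp add: atLeast0AtMost lessThan_Suc_atMost[symmetric] ennreal_of_nat_eq_real_of_nat sum_nonneg)
      also have "\<dots> = ennreal ((\<Sum>k<Suc K. d k) / real (Suc K))"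
      proof -
        have sn: "0 \<le> (\<Sum>k<Suc K. d k)" by (rule sum_nonneg) (use dnn in auto)
        show ?thesis by (rule divide_ennreal[OF sn]) simp
      qed
      finally show ?thesis .
    qed
    have RHSI: "(\<integral>\<^sup>+ s. ennreal (f x0 - fstar + \<gamma> / p * (norm (g 0 s - gradf x0))^2) \<partial>M) = ennreal (\<Phi> 0)"
    proof -
      have eqf: "\<And>s. f x0 - fstar + \<gamma> / p * (norm (g 0 s - gradf x0))^2 = av 0 s + \<gamma> / p * ev 0 s"
        unfolding av_def ev_def x0s by simp
      have "(\<integral>\<^sup>+ s. ennreal (av 0 s + \<gamma> / p * ev 0 s) \<partial>M) = ennreal (\<integral>s. av 0 s + \<gamma> / p * ev 0 s \<partial>M)"
        by (rule nn_integral_eq_integral) (use iav iev avnn evnn params in simp_all)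
      also have "(\<integral>s. av 0 s + \<gamma> / p * ev 0 s \<partial>M) = \<Phi> 0"
        unfolding \<Phi>_def a_def e_def using iav iev by simp
      finally show ?thesis by (simp only: eqf)
    qed
    have "(\<Sum>k<Suc K. d k) / real (Suc K) \<le> C1 * \<Phi> 0 + C2" using avg unfolding ab1 ab2 .
    then have "ennreal ((\<Sum>k<Suc K. d k) / real (Suc K)) \<le> ennreal (C1 * \<Phi> 0 + C2)" by (rule ennreal_leI)
    also have "\<dots> = ennreal C1 * ennreal (\<Phi> 0) + ennreal C2"
      using C1nn C2nn Phinn[of 0] by (simp add: ennreal_plus ennreal_mult)
    finally show ?thesis unfolding LHS RHSI C1_def[symmetric] C2_def[symmetric] .
  qed
qed

end
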